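(* Let $K$ be a division ring and $\Gamma$ a group. If the group ring $K[\Gamma\times H]$ is directly finite for every finite group $H$, then $K[\Gamma]$ is stably finite.
   Context: For a division ring $K$ and a group $G$, $K[G]$ denotes the group ring (the $K$-algebra with basis $G$, coefficients from $K$ commuting with the elements of $G$). A unital ring $A$ is directly finite if $ab=1$ implies $ba=1$ for all $a,b\in A$; it is stably finite if the matrix ring $M_n(A)$ is directly finite for every positive integer $n$. *)

theory Defs
  imports "HOL-Algebra.Algebra"
begin

definition group_ring :: "('g, 'b) monoid_scheme \<Rightarrow> ('g \<Rightarrow> 'k::division_ring) ring" where
  "group_ring G =
     \<lparr> partial_object.carrier = {f. finite {x. f x \<noteq> 0} \<and> (\<forall>x. x \<notin> carrier G \<longrightarrow> f x = 0)},
       monoid.mult = (\<lambda>f h. \<lambda>x. if x \<in> carrier G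
                         then (\<Sum>y\<in>{y. f y \<noteq> 0}. f y * h (inv\<^bsub>G\<^esub> y \<otimes>\<^bsub>G\<^esub> x))
                         else 0),
       monoid.one = (\<lambda>x. if x = \<one>\<^bsub>G\<^esub> then 1 else 0),
       ring.zero = (\<lambda>x. 0),
       ring.add = (\<lambda>f h. \<lambda>x. f x + h x) \<rparr>"

definition matrix_ring :: "('a, 'b) ring_scheme \<Rightarrow> nat \<Rightarrow> (nat \<Rightarrow> nat \<Rightarrow> 'a) ring" where
  "matrix_ring A n =
     \<lparr> partial_object.carrier = {M. (\<forall>i j. i < n \<and> j < n \<longrightarrow> M i j \<in> carrier A) \<and>
                     (\<forall>i j. \<not> (i < n \<and> j < n) \<longrightarrow> M i j = \<zero>\<^bsub>A\<^esub>)},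
       monoid.mult = (\<lambda>M N. \<lambda>i j. if i < n \<and> j < n
                         then (\<Oplus>\<^bsub>A\<^esub>k\<in>{..<n}. M i k \<otimes>\<^bsub>A\<^esub> N k j) else \<zero>\<^bsub>A\<^esub>),
       monoid.one = (\<lambda>i j. if i < n \<and> j = i then \<one>\<^bsub>A\<^esub> else \<zero>\<^bsub>A\<^esub>),
       ring.zero = (\<lambda>i j. \<zero>\<^bsub>A\<^esub>),
       ring.add = (\<lambda>M N. \<lambda>i j. if i < n \<and> j < n then M i j \<oplus>\<^bsub>A\<^esub> N i j else \<zero>\<^bsub>A\<^esub>) \<rparr>"

definition directly_finite :: "('a, 'b) monoid_scheme \<Rightarrow> bool" where
  "directly_finite A \<longleftrightarrow>
     (\<forall>a\<in>carrier A. \<forall>b\<in>carrier A. a \<otimes>\<^bsub>A\<^esub> b = \<one>\<^bsub>A\<^esub> \<longrightarrow> b \<otimes>\<^bsub>A\<^esub> a = \<one>\<^bsub>A\<^esub>)"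

definition stably_finite :: "('a, 'b) ring_scheme \<Rightarrow> bool" where
  "stably_finite A \<longleftrightarrow> (\<forall>n::nat. n \<ge> 1 \<longrightarrow> directly_finite (matrix_ring A n))"

end

theory Submission
  imports Defs "HOL-Library.Nat_Bijection" "HOL-Library.FuncSet"
begin

definition conv :: "('g,'b) monoid_scheme \<Rightarrow> ('g \<Rightarrow> 'c::ring) \<Rightarrow> ('g \<Rightarrow> 'c) \<Rightarrow> 'g \<Rightarrow> 'c" where
 "conv G f h = (\<lambda>x. if x \<in> carrier G then (\<Sum>y\<in>{y. f y \<noteq> 0}. f y * h (inv\<^bsub>G\<^esub> y \<otimes>\<^bsub>G\<^esub> x)) else 0)"

definition gc :: "('g,'b) monoid_scheme \<Rightarrow> ('g \<Rightarrow> 'c::zero) \<Rightarrow> bool" where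
 "gc G f \<longleftrightarrow> finite {x. f x \<noteq> 0} \<and> (\<forall>x. x \<notin> carrier G \<longrightarrow> f x = 0)"

lemma gr_carrier: "carrier (group_ring G) = {f. gc G f}"
  by (simp add: group_ring_def gc_def)
lemma gr_mult: "f \<otimes>\<^bsub>group_ring G\<^esub> h = conv G f h"
  by (simp add: group_ring_def conv_def)
lemma gr_one: "\<one>\<^bsub>group_ring G\<^esub> = (\<lambda>x. if x = \<one>\<^bsub>G\<^esub> then 1 else 0)"
  by (simp add: group_ring_def)
lemma gr_zero: "\<zero>\<^bsub>group_ring G\<^esub> = (\<lambda>x. 0)"
  by (simp add: group_ring_def)
lemma gr_add: "f \<oplus>\<^bsub>group_ring G\<^esub> h = (\<lambda>x. f x + h x)"
  by (simp add: group_ring_def)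

lemma conv_superset:
  assumes "finite S" "{y. f y \<noteq> 0} \<subseteq> S"
  shows "conv G f h x = (if x \<in> carrier G then (\<Sum>y\<in>S. f y * h (inv\<^bsub>G\<^esub> y \<otimes>\<^bsub>G\<^esub> x)) else 0)"
  unfolding conv_def using assms by (auto intro!: sum.mono_neutral_left)

lemma conv_add_left:
  assumes "finite {y. f y \<noteq> 0}" "finite {y. f' y \<noteq> 0}"
  shows "conv G (\<lambda>x. f x + f' x) h = (\<lambda>x. conv G f h x + conv G f' h x)"
proof
  fix x
  let ?S = "{y. f y \<noteq> 0} \<union> {y. f' y \<noteq> 0}"
  have fS: "finite ?S" using assms by simp
  have s: "{y. f y + f' y \<noteq> 0} \<subseteq> ?S" by auto
  show "conv G (\<lambda>x. f x + f' x) h x = conv G f h x + conv G f' h x"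
  proof -
    have e1: "conv G f h x = (if x \<in> carrier G then (\<Sum>y\<in>?S. f y * h (inv\<^bsub>G\<^esub> y \<otimes>\<^bsub>G\<^esub> x)) else 0)"
      by (rule conv_superset[OF fS]) auto
    have e2: "conv G f' h x = (if x \<in> carrier G then (\<Sum>y\<in>?S. f' y * h (inv\<^bsub>G\<^esub> y \<otimes>\<^bsub>G\<^esub> x)) else 0)"
      by (rule conv_superset[OF fS]) auto
    show ?thesis unfolding conv_superset[OF fS s] e1 e2
      by (auto simp: distrib_right sum.distrib)
  qed
qed

lemma conv_diff_left:
  assumes "finite {y. f y \<noteq> 0}" "finite {y. f' y \<noteq> 0}"
  shows "conv G (\<lambda>x. f x - f' x) h = (\<lambda>x. conv G f h x - conv G f' h x)"
proof
  fix x
  let ?S = "{y. f y \<noteq> 0} \<union> {y. f' y \<noteq> 0}"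
  have fS: "finite ?S" using assms by simp
  have s: "{y. f y - f' y \<noteq> 0} \<subseteq> ?S" by auto
  show "conv G (\<lambda>x. f x - f' x) h x = conv G f h x - conv G f' h x"
  proof -
    have e1: "conv G f h x = (if x \<in> carrier G then (\<Sum>y\<in>?S. f y * h (inv\<^bsub>G\<^esub> y \<otimes>\<^bsub>G\<^esub> x)) else 0)"
      by (rule conv_superset[OF fS]) auto
    have e2: "conv G f' h x = (if x \<in> carrier G then (\<Sum>y\<in>?S. f' y * h (inv\<^bsub>G\<^esub> y \<otimes>\<^bsub>G\<^esub> x)) else 0)"
      by (rule conv_superset[OF fS]) auto
    show ?thesis unfolding conv_superset[OF fS s] e1 e2
      by (auto simp: left_diff_distrib sum_subtractf)
  qed
qed

lemma conv_add_right:
  "conv G f (\<lambda>x. h x + h' x) = (\<lambda>x. conv G f h x + conv G f h' x)"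
  by (auto simp: conv_def distrib_left sum.distrib)

lemma conv_diff_right:
  "conv G f (\<lambda>x. h x - h' x) = (\<lambda>x. conv G f h x - conv G f h' x)"
  by (auto simp: conv_def right_diff_distrib sum_subtractf)

lemma conv_sum_right:
  "conv G f (\<lambda>x. \<Sum>a\<in>I. h a x) = (\<lambda>x. \<Sum>a\<in>I. conv G f (h a) x)"
proof
  fix x show "conv G f (\<lambda>x. \<Sum>a\<in>I. h a x) x = (\<Sum>a\<in>I. conv G f (h a) x)"
    by (simp add: conv_def sum_distrib_left sum.swap[of _ I])
qed

lemma fin_supp_sum:
  assumes "finite I" "\<And>a. a \<in> I \<Longrightarrow> finite {x. f a x \<noteq> 0}"
  shows "finite {x. (\<Sum>a\<in>I. f a x) \<noteq> (0::'c::comm_monoid_add)}"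
proof -
  have "{x. (\<Sum>a\<in>I. f a x) \<noteq> 0} \<subseteq> (\<Union>a\<in>I. {x. f a x \<noteq> 0})"
    by (auto elim: sum.not_neutral_contains_not_neutral)
  thus ?thesis using assms by (meson finite_UN_I finite_subset)
qed

lemma conv_zero_left: "conv G (\<lambda>x. 0) h = (\<lambda>x. 0)"
  by (rule ext) (simp add: conv_def)

lemma conv_sum_left:
  assumes "finite I" "\<And>a. a \<in> I \<Longrightarrow> finite {x. f a x \<noteq> 0}"
  shows "conv G (\<lambda>x. \<Sum>a\<in>I. f a x) h = (\<lambda>x. \<Sum>a\<in>I. conv G (f a) h x)"
  using assms
proof (induction I rule: finite_induct)
  case empty
  then show ?case by (simp add: conv_zero_left)
next
  case (insert a I)
  have "conv G (\<lambda>x. \<Sum>b\<in>insert a I. f b x) h = conv G (\<lambda>x. f a x + (\<Sum>b\<in>I. f b x)) h"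
    using insert by simp
  also have "\<dots> = (\<lambda>x. conv G (f a) h x + conv G (\<lambda>x. \<Sum>b\<in>I. f b x) h x)"
    by (rule conv_add_left) (use insert fin_supp_sum in auto)
  finally show ?case using insert by simp
qed

lemma conv_smult_left:
  assumes "finite {y. f y \<noteq> 0}"
  shows "conv G (\<lambda>x. c * f x) h = (\<lambda>x. c * conv G f h x)"
proof
  fix x
  have s: "{y. c * f y \<noteq> 0} \<subseteq> {y. f y \<noteq> 0}" by auto
  show "conv G (\<lambda>x. c * f x) h x = c * conv G f h x"
    unfolding conv_superset[OF assms(1) s] by (auto simp: conv_def sum_distrib_left mult.assoc)
qed

lemma conv_smult_right:
  assumes "\<And>z. z * c = c * z"
  shows "conv G f (\<lambda>x. c * h x) = (\<lambda>x. c * conv G f h x)"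
proof
  fix x
  have "\<And>y. f y * (c * h (inv\<^bsub>G\<^esub> y \<otimes>\<^bsub>G\<^esub> x)) = c * (f y * h (inv\<^bsub>G\<^esub> y \<otimes>\<^bsub>G\<^esub> x))"
    by (metis assms mult.assoc)
  then show "conv G f (\<lambda>x. c * h x) x = c * conv G f h x"
    by (simp add: conv_def sum_distrib_left)
qed

lemma (in group) conv_unit_left:
  fixes h :: "'a \<Rightarrow> 'c::ring_1"
  shows "conv G (\<lambda>x. if x = \<one>\<^bsub>G\<^esub> then 1 else 0) h = (\<lambda>x. if x \<in> carrier G then h x else 0)"
proof
  fix x
  have "{y. (if y = \<one> then 1 else 0) \<noteq> (0::'c)} = {\<one>}" by auto
  thus "conv G (\<lambda>x. if x = \<one> then 1 else 0) h x = (if x \<in> carrier G then h x else 0)"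
    by (simp add: conv_def)
qed

lemma (in group) conv_unit_right:
  fixes f :: "'a \<Rightarrow> 'c::ring_1"
  assumes "gc G f"
  shows "conv G f (\<lambda>x. if x = \<one>\<^bsub>G\<^esub> then 1 else 0) = f"
proof
  fix x
  have fin: "finite {y. f y \<noteq> 0}" and out: "\<And>y. y \<notin> carrier G \<Longrightarrow> f y = 0"
    using assms(1) by (auto simp: gc_def)
  show "conv G f (\<lambda>x. if x = \<one> then 1 else 0) x = f x"
  proof (cases "x \<in> carrier G")
    case True
    have "(\<Sum>y\<in>{y. f y \<noteq> 0}. f y * (if inv y \<otimes> x = \<one> then 1 else 0)) =
          (\<Sum>y\<in>{y. f y \<noteq> 0}. if y = x then f y else 0)"
    proof (rule sum.cong)
      fix y assume "y \<in> {y. f y \<noteq> 0}"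
      then have y: "y \<in> carrier G" using out by auto
      have "inv y \<otimes> x = \<one> \<longleftrightarrow> x = y"
        using inv_solve_left'[OF one_closed y True] y by simp
      thus "f y * (if inv y \<otimes> x = \<one> then 1 else 0) = (if y = x then f y else 0)" by auto
    qed simp
    also have "\<dots> = f x" using fin by (simp add: sum.delta')
    finally show ?thesis using True by (simp add: conv_def)
  next
    case False thus ?thesis using out by (simp add: conv_def)
  qed
qed

lemma (in group) gc_conv:
  assumes "gc G f" "gc G h"
  shows "gc G (conv G f h)"
proof -
  let ?P = "(\<lambda>(y,z). y \<otimes> z) ` ({y. f y \<noteq> 0} \<times> {z. h z \<noteq> 0})"
  have "{x. conv G f h x \<noteq> 0} \<subseteq> ?P"
  proof
    fix x assume "x \<in> {x. conv G f h x \<noteq> 0}"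
    then have x: "x \<in> carrier G" and ne: "(\<Sum>y\<in>{y. f y \<noteq> 0}. f y * h (inv y \<otimes> x)) \<noteq> 0"
      by (auto simp: conv_def split: if_splits)
    from sum.not_neutral_contains_not_neutral[OF ne] obtain y where
      y: "f y \<noteq> 0" "f y * h (inv y \<otimes> x) \<noteq> 0" by auto
    have yc: "y \<in> carrier G" using y assms(1) by (auto simp: gc_def)
    have "h (inv y \<otimes> x) \<noteq> 0" using y by auto
    moreover have "x = y \<otimes> (inv y \<otimes> x)" using yc x by (simp add: m_assoc[symmetric])
    ultimately show "x \<in> ?P" using y by (auto intro!: image_eqI[of _ _ "(y, inv y \<otimes> x)"])
  qed
  moreover have "finite ?P" using assms by (auto simp: gc_def)
  ultimately have "finite {x. conv G f h x \<noteq> 0}" using finite_subset by blast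
  thus ?thesis by (auto simp: gc_def conv_def)
qed

definition VV :: "nat \<Rightarrow> nat \<Rightarrow> (nat \<Rightarrow> nat) set" where
  "VV n q = PiE {..<n} (\<lambda>_. {..<q})"

definition enc :: "nat \<Rightarrow> nat \<times> (nat \<Rightarrow> nat) \<Rightarrow> nat" where
  "enc n p = prod_encode (fst p, list_encode (map (snd p) [0..<n]))"

definition dec :: "nat \<Rightarrow> nat \<Rightarrow> nat \<times> (nat \<Rightarrow> nat)" where
  "dec n x = (fst (prod_decode x), \<lambda>i. if i < n then list_decode (snd (prod_decode x)) ! i else undefined)"

definition pm :: "nat \<Rightarrow> nat \<Rightarrow> nat \<times> (nat \<Rightarrow> nat) \<Rightarrow> nat \<times> (nat \<Rightarrow> nat) \<Rightarrow> nat \<times> (nat \<Rightarrow> nat)" where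
  "pm n q a b = ((fst a + fst b) mod n,
      \<lambda>i. if i < n then (snd a ((i + fst b) mod n) + snd b i) mod q else undefined)"

definition PP :: "nat \<Rightarrow> nat \<Rightarrow> (nat \<times> (nat \<Rightarrow> nat)) set" where
  "PP n q = {..<n} \<times> VV n q"

definition zv :: "nat \<Rightarrow> nat \<Rightarrow> nat" where
  "zv n = (\<lambda>i. if i < n then 0 else undefined)"

definition Wg :: "nat \<Rightarrow> nat \<Rightarrow> nat monoid" where
  "Wg n q = \<lparr>partial_object.carrier = enc n ` PP n q, monoid.mult = (\<lambda>a b. enc n (pm n q (dec n a) (dec n b))),
             monoid.one = enc n (0, zv n)\<rparr>"

lemma dec_enc:
  assumes "p \<in> PP n q" shows "dec n (enc n p) = p"
proof (cases p)
  case (Pair d v)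
  then have "\<forall>i. \<not> i < n \<longrightarrow> v i = undefined" using assms
    unfolding PP_def VV_def PiE_def extensional_def by auto
  then show ?thesis by (simp add: Pair dec_def enc_def fun_eq_iff)
qed

lemma inj_enc: "inj_on (enc n) (PP n q)"
  by (metis dec_enc inj_onI)

lemma pm_closed:
  assumes "0 < n" "0 < q" "a \<in> PP n q" "b \<in> PP n q"
  shows "pm n q a b \<in> PP n q"
  using assms unfolding pm_def PP_def VV_def by (auto simp: PiE_iff extensional_def)

lemma zv_PP: "0 < n \<Longrightarrow> 0 < q \<Longrightarrow> (0, zv n) \<in> PP n q"
  unfolding PP_def VV_def zv_def by (auto simp: PiE_iff extensional_def)

lemma pm_assoc:
  assumes "0 < n" "a \<in> PP n q" "b \<in> PP n q" "c \<in> PP n q"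
  shows "pm n q (pm n q a b) c = pm n q a (pm n q b c)"
proof -
  obtain d v d' v' d'' v'' where e: "a = (d, v)" "b = (d', v')" "c = (d'', v'')"
    by (metis prod.exhaust)
  have 1: "((d + d') mod n + d'') mod n = (d + (d' + d'') mod n) mod n"
    by (simp add: mod_add_left_eq mod_add_right_eq add.assoc)
  have 2: "((v (((i + d'') mod n + d') mod n) + v' ((i + d'') mod n)) mod q + v'' i) mod q
        = (v ((i + (d' + d'') mod n) mod n) + (v' ((i + d'') mod n) + v'' i) mod q) mod q" for i
  proof -
    have "((i + d'') mod n + d') mod n = (i + (d' + d'') mod n) mod n"
      by (simp add: mod_add_left_eq mod_add_right_eq ac_simps)
    thus ?thesis by (simp add: mod_add_left_eq mod_add_right_eq ac_simps)
  qed
  have 3: "(\<lambda>i. if i < n then ((v (((i + d'') mod n + d') mod n) + v' ((i + d'') mod n)) mod q + v'' i) mod q else undefined)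
    = (\<lambda>i. if i < n then (v ((i + (d' + d'') mod n) mod n) + (v' ((i + d'') mod n) + v'' i) mod q) mod q else undefined)"
    using 2 by (intro ext) simp
  show ?thesis unfolding e pm_def fst_conv snd_conv
    by (simp add: 1 2 fun_eq_iff \<open>0 < n\<close>)
qed

lemma pm_lunit:
  assumes "a \<in> PP n q"
  shows "pm n q (0, zv n) a = a"
proof -
  obtain d v where e: "a = (d, v)" by (metis prod.exhaust)
  have d: "d < n" and v: "\<And>i. i < n \<Longrightarrow> v i < q" and u: "\<And>i. \<not> i < n \<Longrightarrow> v i = undefined"
    using assms e by (auto simp: PP_def VV_def PiE_def extensional_def)
  show ?thesis unfolding e pm_def using d v u by (auto simp: zv_def fun_eq_iff)
qed

lemma idx_back: "i < n \<Longrightarrow> d < (n::nat) \<Longrightarrow> ((i + d) mod n + n - d) mod n = i"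
proof (cases "i + d < n")
  case True
  assume "i < n" "d < n"
  then show ?thesis using True by simp
next
  case False
  assume a: "i < n" "d < n"
  then have "(i + d) mod n = i + d - n" using False
    by (simp add: le_mod_geq)
  then show ?thesis using a False by simp
qed

definition pinv :: "nat \<Rightarrow> nat \<Rightarrow> nat \<times> (nat \<Rightarrow> nat) \<Rightarrow> nat \<times> (nat \<Rightarrow> nat)" where
  "pinv n q a = ((n - fst a) mod n, \<lambda>i. if i < n then (q - snd a ((i + n - fst a) mod n)) mod q else undefined)"

lemma pinv_PP: "0 < n \<Longrightarrow> 0 < q \<Longrightarrow> a \<in> PP n q \<Longrightarrow> pinv n q a \<in> PP n q"
  unfolding pinv_def PP_def VV_def by (auto simp: PiE_iff extensional_def)

lemma pinv_l:
  assumes "0 < n" "a \<in> PP n q"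
  shows "pm n q (pinv n q a) a = (0, zv n)"
proof -
  obtain d v where e: "a = (d, v)" by (metis prod.exhaust)
  have d: "d < n" and v: "\<And>i. i < n \<Longrightarrow> v i < q" using assms e by (auto simp: PP_def VV_def)
  have 1: "((n - d) mod n + d) mod n = 0"
    by (simp add: mod_add_left_eq d less_imp_le_nat)
  have 2: "((q - v (((i + d) mod n + n - d) mod n)) mod q + v i) mod q = 0" if "i < n" for i
  proof -
    have "((q - v i) mod q + v i) mod q = 0" using v[OF that] by (simp add: mod_add_left_eq)
    then show ?thesis using idx_back[OF that d] by simp
  qed
  show ?thesis unfolding e pm_def pinv_def using 1 2 by (auto simp: zv_def fun_eq_iff)
qed

lemma Wg_mult: "a \<in> PP n q \<Longrightarrow> b \<in> PP n q \<Longrightarrow> enc n a \<otimes>\<^bsub>Wg n q\<^esub> enc n b = enc n (pm n q a b)"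
  by (simp add: Wg_def dec_enc)

lemma Wg_one: "\<one>\<^bsub>Wg n q\<^esub> = enc n (0, zv n)"
  by (simp add: Wg_def)

lemma Wg_carrier: "carrier (Wg n q) = enc n ` PP n q"
  by (simp add: Wg_def)

lemma Wg_group:
  assumes "0 < n" "0 < q"
  shows "group (Wg n q)"
proof (rule groupI)
  show "\<one>\<^bsub>Wg n q\<^esub> \<in> carrier (Wg n q)" using zv_PP[OF assms] by (simp add: Wg_def)
next
  fix x y assume "x \<in> carrier (Wg n q)" "y \<in> carrier (Wg n q)"
  then show "x \<otimes>\<^bsub>Wg n q\<^esub> y \<in> carrier (Wg n q)"
    using pm_closed[OF assms] by (auto simp: Wg_def dec_enc)
next
  fix x y z assume "x \<in> carrier (Wg n q)" "y \<in> carrier (Wg n q)" "z \<in> carrier (Wg n q)"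
  then obtain a b c where abc: "a \<in> PP n q" "b \<in> PP n q" "c \<in> PP n q" "x = enc n a" "y = enc n b" "z = enc n c"
    by (auto simp: Wg_def)
  show "x \<otimes>\<^bsub>Wg n q\<^esub> y \<otimes>\<^bsub>Wg n q\<^esub> z = x \<otimes>\<^bsub>Wg n q\<^esub> (y \<otimes>\<^bsub>Wg n q\<^esub> z)"
  proof -
    have "pm n q a b \<in> PP n q" "pm n q b c \<in> PP n q" using abc pm_closed[OF assms] by auto
    then show ?thesis using abc by (simp add: Wg_mult pm_assoc[OF assms(1)])
  qed
next
  fix x assume "x \<in> carrier (Wg n q)"
  then obtain a where a: "a \<in> PP n q" "x = enc n a" by (auto simp: Wg_carrier)
  show "\<one>\<^bsub>Wg n q\<^esub> \<otimes>\<^bsub>Wg n q\<^esub> x = x"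
    using a zv_PP[OF assms] by (simp add: Wg_one Wg_mult pm_lunit)
next
  fix x assume "x \<in> carrier (Wg n q)"
  then obtain a where a: "a \<in> PP n q" "x = enc n a" by (auto simp: Wg_def)
  show "\<exists>y\<in>carrier (Wg n q). y \<otimes>\<^bsub>Wg n q\<^esub> x = \<one>\<^bsub>Wg n q\<^esub>"
  proof
    show "enc n (pinv n q a) \<in> carrier (Wg n q)" using pinv_PP[OF assms a(1)] by (simp add: Wg_carrier)
    show "enc n (pinv n q a) \<otimes>\<^bsub>Wg n q\<^esub> x = \<one>\<^bsub>Wg n q\<^esub>"
      using a pinv_PP[OF assms a(1)] pinv_l[OF assms(1) a(1)] by (simp add: Wg_mult Wg_one)
  qed
qed

lemma Wg_finite: "finite (carrier (Wg n q))"
  by (simp add: Wg_def PP_def VV_def finite_PiE)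

definition Q :: "nat \<Rightarrow> nat \<Rightarrow> nat \<Rightarrow> (nat \<Rightarrow> nat \<Rightarrow> int) \<Rightarrow> nat \<Rightarrow> int" where
  "Q n q d w x = (if x \<in> carrier (Wg n q) \<and> fst (dec n x) = d then (\<Prod>i<n. w i (snd (dec n x) i)) else 0)"

definition cq :: "nat \<Rightarrow> (nat \<Rightarrow> int) \<Rightarrow> (nat \<Rightarrow> int) \<Rightarrow> nat \<Rightarrow> int" where
  "cq q f g b = (\<Sum>c<q. f c * g ((b + q - c) mod q))"

lemma sub_mod_aux:
  assumes "(a + v) mod q = (u::nat)" "a < q" "v < q"
  shows "(u + q - a) mod q = v"
proof (cases "a + v < q")
  case True
  then have "u = a + v" using assms by simp
  then show ?thesis using assms by simp
next
  case False
  then have "u = a + v - q" using assms by (simp add: le_mod_geq)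
  then have "u + q - a = v" using False by simp
  then show ?thesis using assms by simp
qed

lemma mod_two_cases: "a < n \<Longrightarrow> b < (n::nat) \<Longrightarrow> (a + b) mod n = (if a + b < n then a + b else a + b - n)"
  by (simp add: le_mod_geq)

lemma mod_cancel_aux:
  assumes "(d + a) mod n = (d + b) mod (n::nat)" "a < n" "b < n" "d < n"
  shows "a = b"
  using assms mod_two_cases[of d n a] mod_two_cases[of d n b] by (auto split: if_splits)

lemma idx_fwd: "j < n \<Longrightarrow> d < (n::nat) \<Longrightarrow> ((j + n - d) mod n + d) mod n = j"
  by (simp add: mod_add_left_eq)

lemma sig_bij: "d < (n::nat) \<Longrightarrow> bij_betw (\<lambda>i. (i + d) mod n) {..<n} {..<n}"
  by (rule bij_betw_byWitness[where f'="\<lambda>j. (j + n - d) mod n"]) (auto simp: idx_back idx_fwd)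

lemma Q_product:
  assumes n: "0 < n" and q: "0 < q" and d: "d < n" and d': "d' < n"
  shows "conv (Wg n q) (Q n q d w) (Q n q d' w') =
         Q n q ((d + d') mod n) (\<lambda>i b. cq q (w ((i + d') mod n)) (w' i) b)"
proof
  fix x
  interpret W: group "Wg n q" by (rule Wg_group[OF n q])
  let ?s = "\<lambda>i. (i + d') mod n"
  show "conv (Wg n q) (Q n q d w) (Q n q d' w') x = Q n q ((d + d') mod n) (\<lambda>i b. cq q (w (?s i)) (w' i) b) x"
  proof (cases "x \<in> carrier (Wg n q)")
    case False
    then show ?thesis by (simp add: conv_def Q_def)
  next
    case True
    then obtain e u where eu: "(e, u) \<in> PP n q" "x = enc n (e, u)" by (auto simp: Wg_carrier)
    have e: "e < n" and u: "\<And>i. i < n \<Longrightarrow> u i < q" using eu by (auto simp: PP_def VV_def)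
    let ?S = "enc n ` ({d} \<times> VV n q)"
    have fS: "finite ?S" by (simp add: VV_def finite_PiE)
    have sS: "{y. Q n q d w y \<noteq> 0} \<subseteq> ?S"
    proof
      fix y assume "y \<in> {y. Q n q d w y \<noteq> 0}"
      then have "y \<in> carrier (Wg n q)" "fst (dec n y) = d" by (auto simp: Q_def split: if_splits)
      then obtain p where "p \<in> PP n q" "y = enc n p" "fst p = d" by (auto simp: Wg_carrier dec_enc)
      then show "y \<in> ?S" by (cases p) (auto simp: PP_def)
    qed
    let ?z = "\<lambda>v. (\<lambda>i. if i < n then (u i + q - v (?s i)) mod q else undefined)"
    have key: "Q n q d' w' (inv\<^bsub>Wg n q\<^esub> (enc n (d, v)) \<otimes>\<^bsub>Wg n q\<^esub> x) =
               (if e = (d + d') mod n then (\<Prod>i<n. w' i (?z v i)) else 0)" if v: "v \<in> VV n q" for v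
    proof -
      have y: "enc n (d, v) \<in> carrier (Wg n q)" using v d by (auto simp: Wg_carrier PP_def)
      define t where "t = inv\<^bsub>Wg n q\<^esub> (enc n (d, v)) \<otimes>\<^bsub>Wg n q\<^esub> x"
      have tc: "t \<in> carrier (Wg n q)" using y True by (simp add: t_def)
      have yt: "enc n (d, v) \<otimes>\<^bsub>Wg n q\<^esub> t = x" using y True
        by (simp add: t_def W.m_assoc[symmetric])
      obtain d1 v1 where t1: "(d1, v1) \<in> PP n q" "t = enc n (d1, v1)" using tc by (auto simp: Wg_carrier)
      have "enc n (pm n q (d, v) (d1, v1)) = enc n (e, u)"
        using yt eu t1 Wg_mult[of "(d, v)" n q "(d1, v1)"] v d by (simp add: PP_def)
      then have pe: "pm n q (d, v) (d1, v1) = (e, u)"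
        using pm_closed[OF n q, of "(d,v)" "(d1,v1)"] t1 eu v d
        by (metis dec_enc PP_def SigmaI lessThan_iff)
      have e1: "e = (d + d1) mod n" using pe by (simp add: pm_def)
      have d1: "d1 < n" and v1: "\<And>i. i < n \<Longrightarrow> v1 i < q" using t1 by (auto simp: PP_def VV_def)
      have vq: "\<And>i. i < n \<Longrightarrow> v i < q" using v by (auto simp: VV_def)
      show ?thesis
      proof (cases "d1 = d'")
        case True
        have "v1 i = ?z v i" if "i < n" for i
        proof -
          have "snd (pm n q (d, v) (d1, v1)) i = u i" using pe by simp
          then have "u i = (v (?s i) + v1 i) mod q" using that True by (simp add: pm_def)
          then show ?thesis using sub_mod_aux[of "v (?s i)" "v1 i" q "u i"] that vq[of "?s i"] v1[OF that] n
            by simp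
        qed
        then show ?thesis using e1 True t1 tc unfolding t_def[symmetric]
          by (simp add: Q_def dec_enc)
      next
        case False
        then have "e \<noteq> (d + d') mod n" using e1 mod_cancel_aux[of d d1 n d'] d1 d' d by auto
        then show ?thesis using False t1 unfolding t_def[symmetric] by (simp add: Q_def dec_enc)
      qed
    qed
    have "conv (Wg n q) (Q n q d w) (Q n q d' w') x =
          (\<Sum>y\<in>?S. Q n q d w y * Q n q d' w' (inv\<^bsub>Wg n q\<^esub> y \<otimes>\<^bsub>Wg n q\<^esub> x))"
      by (simp add: conv_superset[OF fS sS] True)
    also have "\<dots> = (\<Sum>v\<in>VV n q. Q n q d w (enc n (d, v)) * Q n q d' w' (inv\<^bsub>Wg n q\<^esub> (enc n (d, v)) \<otimes>\<^bsub>Wg n q\<^esub> x))"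
    proof -
      have "inj_on (enc n) ({d} \<times> VV n q)"
        by (rule inj_on_subset[OF inj_enc[of n q]]) (use d in \<open>auto simp: PP_def\<close>)
      then have "inj_on (\<lambda>v. enc n (d, v)) (VV n q)" by (auto simp: inj_on_def)
      moreover have "?S = (\<lambda>v. enc n (d, v)) ` VV n q" by auto
      ultimately show ?thesis by (simp add: sum.reindex)
    qed
    also have "\<dots> = (\<Sum>v\<in>VV n q. (\<Prod>i<n. w i (v i)) * (if e = (d + d') mod n then (\<Prod>i<n. w' i (?z v i)) else 0))"
    proof (rule sum.cong)
      fix v assume v: "v \<in> VV n q"
      have "Q n q d w (enc n (d, v)) = (\<Prod>i<n. w i (v i))"
        using v d by (simp add: Q_def dec_enc Wg_carrier PP_def)
      then show "Q n q d w (enc n (d, v)) * Q n q d' w' (inv\<^bsub>Wg n q\<^esub> (enc n (d, v)) \<otimes>\<^bsub>Wg n q\<^esub> x) =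
          (\<Prod>i<n. w i (v i)) * (if e = (d + d') mod n then (\<Prod>i<n. w' i (?z v i)) else 0)"
        using key[OF v] by simp
    qed simp
    also have "\<dots> = Q n q ((d + d') mod n) (\<lambda>i b. cq q (w (?s i)) (w' i) b) x"
    proof (cases "e = (d + d') mod n")
      case False
      then show ?thesis using eu by (simp add: Q_def dec_enc Wg_carrier)
    next
      case ee: True
      let ?F = "\<lambda>i b. w (?s i) b * w' i ((u i + q - b) mod q)"
      have "(\<Sum>v\<in>VV n q. (\<Prod>i<n. w i (v i)) * (\<Prod>i<n. w' i (?z v i))) =
            (\<Sum>v\<in>VV n q. (\<Prod>i<n. ?F i (v (?s i))))"
      proof (rule sum.cong)
        fix v assume v: "v \<in> VV n q"
        have "(\<Prod>i<n. w i (v i)) = (\<Prod>i<n. w (?s i) (v (?s i)))"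
          using prod.reindex_bij_betw[OF sig_bij[OF d'], of "\<lambda>i. w i (v i)"] by simp
        then show "(\<Prod>i<n. w i (v i)) * (\<Prod>i<n. w' i (?z v i)) = (\<Prod>i<n. ?F i (v (?s i)))"
          by (simp add: prod.distrib)
      qed simp
      also have "\<dots> = (\<Sum>a\<in>VV n q. (\<Prod>i<n. ?F i (a i)))"
      proof (rule sum.reindex_bij_witness[where i="\<lambda>a. (\<lambda>i. if i < n then a ((i + n - d') mod n) else undefined)"
                                          and j="\<lambda>v. (\<lambda>i. if i < n then v (?s i) else undefined)"])
        fix v assume v: "v \<in> VV n q"
        show "(\<lambda>i. if i < n then (if (i + n - d') mod n < n then v (((i + n - d') mod n + d') mod n) else undefined) else undefined) = v"
          using v n d' by (auto simp: fun_eq_iff idx_fwd VV_def PiE_def extensional_def)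
        show "(\<lambda>i. if i < n then v (?s i) else undefined) \<in> VV n q"
          using v n by (auto simp: VV_def PiE_iff extensional_def)
        show "(\<Prod>i<n. ?F i ((if i < n then v (?s i) else undefined))) = (\<Prod>i<n. ?F i (v (?s i)))"
          by simp
      next
        fix a assume a: "a \<in> VV n q"
        show "(\<lambda>i. if i < n then (if ?s i < n then a ((?s i + n - d') mod n) else undefined) else undefined) = a"
          using a n d' by (auto simp: fun_eq_iff idx_back VV_def PiE_def extensional_def)
        show "(\<lambda>i. if i < n then a ((i + n - d') mod n) else undefined) \<in> VV n q"
          using a n by (auto simp: VV_def PiE_iff extensional_def)
      qed
      also have "\<dots> = (\<Prod>i<n. \<Sum>b<q. ?F i b)"
        by (simp add: VV_def prod_sum_PiE)
      also have "\<dots> = Q n q ((d + d') mod n) (\<lambda>i b. cq q (w (?s i)) (w' i) b) x"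
        using eu ee by (simp add: Q_def dec_enc Wg_carrier cq_def)
      finally show ?thesis using ee by simp
    qed
    finally show ?thesis .
  qed
qed

definition pat :: "nat \<Rightarrow> nat \<Rightarrow> nat \<Rightarrow> nat \<Rightarrow> int" where
  "pat q j i b = (if i = j then 0 else int q) * (if b = 0 then 1 else 0) + (if i = j then 1 else -1)"

definition EE :: "nat \<Rightarrow> nat \<Rightarrow> nat \<Rightarrow> nat \<Rightarrow> nat \<Rightarrow> int" where
  "EE n q i j = Q n q ((i + n - j) mod n) (pat q j)"

lemma L1:
  assumes b: "b < q" and c: "c < (q::nat)"
  shows "((b + q - c) mod q = 0 \<longleftrightarrow> c = b)"
proof (cases "c \<le> b")
  case True
  then have e: "b + q - c = (b - c) + q" by simp
  have "b - c < q" using b by linarith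
  then have "(b + q - c) mod q = b - c" unfolding e mod_add_self2 by (rule mod_less)
  then show ?thesis using True by linarith
next
  case False
  then have "b + q - c < q" using c by linarith
  then have "(b + q - c) mod q = b + q - c" by (rule mod_less)
  then show ?thesis using False c by linarith
qed

lemma cq_lin:
  assumes b: "b < q"
  shows "cq q (\<lambda>c. \<alpha> * (if c = 0 then 1 else 0) + \<beta>) (\<lambda>c. \<gamma> * (if c = 0 then 1 else 0) + \<epsilon>) b =
         \<alpha> * \<gamma> * (if b = 0 then 1 else 0) + \<alpha> * \<epsilon> + \<beta> * \<gamma> + \<beta> * \<epsilon> * int q"
proof -
  have q: "0 < q" using b by simp
  have "cq q (\<lambda>c. \<alpha> * (if c = 0 then 1 else 0) + \<beta>) (\<lambda>c. \<gamma> * (if c = 0 then 1 else 0) + \<epsilon>) b =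
        (\<Sum>c<q. (\<alpha> * (if c = 0 then 1 else 0) + \<beta>) * (\<gamma> * (if c = b then 1 else 0) + \<epsilon>))"
    unfolding cq_def by (rule sum.cong) (simp_all add: L1[OF b])
  also have "\<dots> = (\<Sum>c<q. (if c = 0 then \<alpha> * \<gamma> * (if b = 0 then 1 else 0) else 0))
                 + (\<Sum>c<q. (if c = 0 then \<alpha> * \<epsilon> else 0))
                 + (\<Sum>c<q. (if c = b then \<beta> * \<gamma> else 0)) + (\<Sum>c<q. \<beta> * \<epsilon>)"
  proof -
    have "(\<alpha> * (if c = 0 then 1 else 0) + \<beta>) * (\<gamma> * (if c = b then 1 else 0) + \<epsilon>) =
      (if c = 0 then \<alpha> * \<gamma> * (if b = 0 then 1 else 0) else 0) + (if c = 0 then \<alpha> * \<epsilon> else 0)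
      + (if c = b then \<beta> * \<gamma> else 0) + \<beta> * \<epsilon>" for c
      by (cases "c = 0"; cases "c = b") (simp_all add: algebra_simps)
    then show ?thesis by (simp only: sum.distrib)
  qed
  also have "\<dots> = \<alpha> * \<gamma> * (if b = 0 then 1 else 0) + \<alpha> * \<epsilon> + \<beta> * \<gamma> + \<beta> * \<epsilon> * int q"
    using b q by (simp add: sum.delta)
  finally show ?thesis .
qed

lemma pat_eq: "pat q j a = (\<lambda>c. (if a = j then 0 else int q) * (if c = 0 then 1 else 0) + (if a = j then 1 else -1))"
  by (simp add: pat_def fun_eq_iff)

lemma cq_pat:
  assumes "b < q"
  shows "cq q (pat q j a) (pat q l a') b =
         (if a = j \<and> a' = l then int q else if a \<noteq> j \<and> a' \<noteq> l then int q * pat q l a' b else 0)"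
  unfolding pat_eq[of q j a] pat_eq[of q l a'] cq_lin[OF assms]
  by (auto simp: pat_def algebra_simps)

lemma VV_mem: "v \<in> VV n q \<Longrightarrow> i < n \<Longrightarrow> v i < q"
  unfolding VV_def using PiE_mem by fastforce

lemma dec_in: "x \<in> carrier (Wg n q) \<Longrightarrow> dec n x \<in> PP n q"
  by (auto simp: Wg_carrier dec_enc)

lemma dec_snd_lt: "x \<in> carrier (Wg n q) \<Longrightarrow> i < n \<Longrightarrow> snd (dec n x) i < q"
  using dec_in[of x n q] VV_mem[of "snd (dec n x)" n q i] by (auto simp: PP_def mem_Times_iff)

lemma Q_cong:
  assumes "\<And>i b. i < n \<Longrightarrow> b < q \<Longrightarrow> w i b = w' i b"
  shows "Q n q d w = Q n q d w'"
proof
  fix x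
  show "Q n q d w x = Q n q d w' x"
  proof (cases "x \<in> carrier (Wg n q) \<and> fst (dec n x) = d")
    case True
    then have "\<And>i. i < n \<Longrightarrow> snd (dec n x) i < q" using dec_snd_lt by blast
    then show ?thesis using True assms by (simp add: Q_def)
  next
    case False
    then show ?thesis unfolding Q_def by presburger
  qed
qed

lemma Q_scale: "Q n q d (\<lambda>i b. c * w i b) x = c ^ n * Q n q d w x"
  by (simp add: Q_def prod.distrib)

lemma Q_zero:
  assumes "l < n" "\<And>b. b < q \<Longrightarrow> w l b = 0"
  shows "Q n q d w x = 0"
proof (cases "x \<in> carrier (Wg n q) \<and> fst (dec n x) = d")
  case True
  then have "snd (dec n x) l < q" using assms(1) dec_snd_lt by blast
  then have "w l (snd (dec n x) l) = 0" using assms by simp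
  then show ?thesis using assms(1) True unfolding Q_def by (simp add: prod_zero_iff) (meson lessThan_iff)
next
  case False
  then show ?thesis unfolding Q_def by presburger
qed

lemma idx_add:
  assumes "i < n" "j < n" "l < (n::nat)"
  shows "((i + n - j) mod n + (j + n - l) mod n) mod n = (i + n - l) mod n"
proof -
  have "((i + n - j) mod n + (j + n - l) mod n) mod n = ((i + n - j) + (j + n - l)) mod n"
    by (simp add: mod_add_left_eq mod_add_right_eq)
  also have "(i + n - j) + (j + n - l) = (i + n - l) + n" using assms by simp
  finally show ?thesis by simp
qed

lemma idx_l:
  assumes "k < n" "l < (n::nat)"
  shows "(l + (k + n - l) mod n) mod n = k"
proof -
  have "(l + (k + n - l) mod n) mod n = (l + (k + n - l)) mod n" by (simp add: mod_add_right_eq)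
  also have "l + (k + n - l) = k + n" using assms by simp
  finally show ?thesis using assms by simp
qed

lemma EE_mult:
  assumes n: "0 < n" and q: "0 < q" and ijkl: "i < n" "j < n" "k < n" "l < n"
  shows "conv (Wg n q) (EE n q i j) (EE n q k l) = (\<lambda>x. if j = k then int q ^ n * EE n q i l x else 0)"
proof -
  let ?d = "(i + n - j) mod n" and ?d' = "(k + n - l) mod n"
  have dd: "?d < n" "?d' < n" using n by auto
  have P: "conv (Wg n q) (EE n q i j) (EE n q k l) =
        Q n q ((?d + ?d') mod n) (\<lambda>a b. cq q (pat q j ((a + ?d') mod n)) (pat q l a) b)"
    unfolding EE_def by (rule Q_product[OF n q dd])
  show ?thesis
  proof (cases "j = k")
    case True
    have 1: "(?d + ?d') mod n = (i + n - l) mod n" using True idx_add[OF ijkl(1,2,4)] by simp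
    have 2: "cq q (pat q j ((a + ?d') mod n)) (pat q l a) b = int q * pat q l a b" if "a < n" "b < q" for a b
    proof -
      have "(a + ?d') mod n = j \<longleftrightarrow> a = l"
      proof
        assume "(a + ?d') mod n = j"
        then have "(?d' + a) mod n = (?d' + l) mod n" using idx_l[OF ijkl(3,4)] True by (simp add: add.commute)
        then show "a = l" using mod_cancel_aux[of ?d' a n l] that ijkl dd by auto
      next
        assume "a = l" then show "(a + ?d') mod n = j" using idx_l[OF ijkl(3,4)] True by simp
      qed
      then show ?thesis using cq_pat[OF that(2), of j "(a + ?d') mod n" l a] by (auto simp: pat_def)
    qed
    have "conv (Wg n q) (EE n q i j) (EE n q k l) = Q n q ((i + n - l) mod n) (\<lambda>a b. int q * pat q l a b)"
      unfolding P 1 by (rule Q_cong) (use 2 in simp)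
    then show ?thesis using True by (simp add: fun_eq_iff Q_scale EE_def)
  next
    case False
    have "Q n q ((?d + ?d') mod n) (\<lambda>a b. cq q (pat q j ((a + ?d') mod n)) (pat q l a) b) x = 0" for x
    proof (rule Q_zero[OF ijkl(4)])
      fix b assume b: "b < q"
      have "(l + ?d') mod n = k" using idx_l[OF ijkl(3,4)] .
      then show "cq q (pat q j ((l + ?d') mod n)) (pat q l l) b = 0"
        using cq_pat[OF b, of j "(l + ?d') mod n" l l] False by simp
    qed
    then show ?thesis using False P by (simp add: fun_eq_iff)
  qed
qed

definition dW :: "nat \<Rightarrow> nat \<Rightarrow> nat \<Rightarrow> int" where
  "dW n q = (\<lambda>x. if x = \<one>\<^bsub>Wg n q\<^esub> then 1 else 0)"

definition FF :: "nat \<Rightarrow> nat \<Rightarrow> nat \<Rightarrow> int" where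
  "FF n q = (\<lambda>x. int q ^ n * dW n q x - (\<Sum>k<n. EE n q k k x))"

lemma gcW: "(\<And>x. x \<notin> carrier (Wg n q) \<Longrightarrow> f x = 0) \<Longrightarrow> gc (Wg n q) f"
  unfolding gc_def using Wg_finite[of n q]
  by (metis (mono_tags, lifting) finite_subset mem_Collect_eq subsetI)

lemma EE_out: "x \<notin> carrier (Wg n q) \<Longrightarrow> EE n q i j x = 0"
  by (simp add: EE_def Q_def)

lemma gc_EE: "gc (Wg n q) (EE n q i j)"
  by (rule gcW) (rule EE_out)

lemma fin_EE: "finite {x. EE n q i j x \<noteq> 0}"
  using gc_EE by (simp add: gc_def)

lemma gc_dW: "0 < n \<Longrightarrow> 0 < q \<Longrightarrow> gc (Wg n q) (dW n q)"
  by (rule gcW) (use monoid.one_closed[OF group.is_monoid[OF Wg_group]] in \<open>auto simp: dW_def\<close>)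

lemma gc_FF: "0 < n \<Longrightarrow> 0 < q \<Longrightarrow> gc (Wg n q) (FF n q)"
  by (rule gcW) (use gc_dW in \<open>auto simp: FF_def EE_out gc_def\<close>)

lemma EE_FF:
  assumes n: "0 < n" and q: "0 < q" and ij: "i < n" "j < n"
  shows "conv (Wg n q) (EE n q i j) (FF n q) = (\<lambda>x. 0)"
proof -
  interpret W: group "Wg n q" by (rule Wg_group[OF n q])
  have "conv (Wg n q) (EE n q i j) (FF n q) =
        (\<lambda>x. conv (Wg n q) (EE n q i j) (\<lambda>x. int q ^ n * dW n q x) x -
             conv (Wg n q) (EE n q i j) (\<lambda>x. \<Sum>k<n. EE n q k k x) x)"
    unfolding FF_def by (rule conv_diff_right)
  also have "\<dots> = (\<lambda>x. int q ^ n * EE n q i j x - (\<Sum>k<n. if j = k then int q ^ n * EE n q i k x else 0))"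
    unfolding conv_smult_right[of "int q ^ n", OF mult.commute] conv_sum_right
      EE_mult[OF n q ij] dW_def W.conv_unit_right[OF gc_EE]
    using ij by (simp add: EE_mult[OF n q])
  also have "\<dots> = (\<lambda>x. 0)" using ij by (simp add: sum.delta)
  finally show ?thesis .
qed

lemma FF_EE:
  assumes n: "0 < n" and q: "0 < q" and kl: "k < n" "l < n"
  shows "conv (Wg n q) (FF n q) (EE n q k l) = (\<lambda>x. 0)"
proof -
  interpret W: group "Wg n q" by (rule Wg_group[OF n q])
  have f1: "finite {x. int q ^ n * dW n q x \<noteq> 0}" using gc_dW[OF n q]
    by (auto simp: gc_def elim: finite_subset[rotated])
  have f2: "finite {x. (\<Sum>k<n. EE n q k k x) \<noteq> 0}" by (rule fin_supp_sum) (auto simp: fin_EE)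
  have "conv (Wg n q) (FF n q) (EE n q k l) =
        (\<lambda>x. conv (Wg n q) (\<lambda>x. int q ^ n * dW n q x) (EE n q k l) x -
             conv (Wg n q) (\<lambda>x. \<Sum>k<n. EE n q k k x) (EE n q k l) x)"
    unfolding FF_def by (rule conv_diff_left[OF f1 f2])
  also have "\<dots> = (\<lambda>x. int q ^ n * EE n q k l x - (\<Sum>k'<n. if k' = k then int q ^ n * EE n q k' l x else 0))"
  proof -
    have a: "conv (Wg n q) (\<lambda>x. int q ^ n * dW n q x) (EE n q k l) = (\<lambda>x. int q ^ n * EE n q k l x)"
      using gc_dW[OF n q] W.conv_unit_left[of "EE n q k l"]
      by (simp add: conv_smult_left gc_def dW_def fun_eq_iff EE_out)
    have b: "conv (Wg n q) (\<lambda>x. \<Sum>k<n. EE n q k k x) (EE n q k l) = (\<lambda>x. \<Sum>k'<n. if k' = k then int q ^ n * EE n q k' l x else 0)"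
      by (simp add: conv_sum_left fin_EE EE_mult[OF n q] kl)
    show ?thesis by (simp add: a b)
  qed
  also have "\<dots> = (\<lambda>x. 0)" using kl by (simp add: sum.delta)
  finally show ?thesis .
qed

lemma FF_FF:
  assumes n: "0 < n" and q: "0 < q"
  shows "conv (Wg n q) (FF n q) (FF n q) = (\<lambda>x. int q ^ n * FF n q x)"
proof -
  interpret W: group "Wg n q" by (rule Wg_group[OF n q])
  have f1: "finite {x. int q ^ n * dW n q x \<noteq> 0}" using gc_dW[OF n q]
    by (auto simp: gc_def elim: finite_subset[rotated])
  have f2: "finite {x. (\<Sum>k<n. EE n q k k x) \<noteq> 0}" by (rule fin_supp_sum) (auto simp: fin_EE)
  have "conv (Wg n q) (FF n q) (FF n q) =
        (\<lambda>x. conv (Wg n q) (\<lambda>x. int q ^ n * dW n q x) (FF n q) x -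
             conv (Wg n q) (\<lambda>x. \<Sum>k<n. EE n q k k x) (FF n q) x)"
    unfolding FF_def[of n q, symmetric] by (subst (1) FF_def) (rule conv_diff_left[OF f1 f2])
  also have "\<dots> = (\<lambda>x. int q ^ n * FF n q x)"
  proof -
    have a: "conv (Wg n q) (\<lambda>x. int q ^ n * dW n q x) (FF n q) = (\<lambda>x. int q ^ n * FF n q x)"
      using gc_dW[OF n q] W.conv_unit_left[of "FF n q"] gc_FF[OF n q]
      by (simp add: conv_smult_left gc_def dW_def fun_eq_iff)
    have b: "conv (Wg n q) (\<lambda>x. \<Sum>k<n. EE n q k k x) (FF n q) = (\<lambda>x. 0)"
      by (simp add: conv_sum_left fin_EE EE_FF[OF n q])
    show ?thesis by (simp add: a b)
  qed
  finally show ?thesis .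
qed

definition TT :: "('g \<Rightarrow> 'k::ring_1) \<Rightarrow> ('h \<Rightarrow> int) \<Rightarrow> 'g \<times> 'h \<Rightarrow> 'k" where
  "TT x u = (\<lambda>p. x (fst p) * of_int (u (snd p)))"

lemma TT_supp: "{p. TT x u p \<noteq> 0} \<subseteq> {g. x g \<noteq> 0} \<times> {h. u h \<noteq> 0}"
  by (auto simp: TT_def)

lemma fin_TT: "finite {g. x g \<noteq> 0} \<Longrightarrow> finite {h. u h \<noteq> 0} \<Longrightarrow> finite {p. TT x u p \<noteq> 0}"
  by (rule finite_subset[OF TT_supp]) simp

lemma gc_TT: "gc G x \<Longrightarrow> gc H u \<Longrightarrow> gc (G \<times>\<times> H) (TT x u)"
  unfolding gc_def using fin_TT[of x u] by (auto simp: TT_def)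

lemma of_int_left_comm: "of_int a * (b * c) = b * (of_int a * (c::'k::ring_1))"
  by (metis mult.assoc mult_of_int_commute)

lemma tensor:
  assumes G: "group G" and H: "group H" and x: "gc G x" and u: "gc H u"
  shows "conv (G \<times>\<times> H) (TT x u) (TT y v) = TT (conv G x y) (conv H u v)"
proof
  fix p :: "'a \<times> 'c"
  obtain g h where p: "p = (g, h)" by (cases p)
  interpret G: group G by fact
  interpret H: group H by fact
  show "conv (G \<times>\<times> H) (TT x u) (TT y v) p = TT (conv G x y) (conv H u v) p"
  proof (cases "g \<in> carrier G \<and> h \<in> carrier H")
    case False
    then show ?thesis by (auto simp: conv_def TT_def p)
  next
    case True
    let ?A = "{g. x g \<noteq> 0}" and ?B = "{h. u h \<noteq> 0}"
    have fA: "finite ?A" and fB: "finite ?B" using x u by (auto simp: gc_def)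
    have Ac: "?A \<subseteq> carrier G" and Bc: "?B \<subseteq> carrier H" using x u by (auto simp: gc_def)
    have "conv (G \<times>\<times> H) (TT x u) (TT y v) p =
       (\<Sum>z\<in>?A \<times> ?B. TT x u z * TT y v (inv\<^bsub>G \<times>\<times> H\<^esub> z \<otimes>\<^bsub>G \<times>\<times> H\<^esub> p))"
    proof -
      have fAB: "finite (?A \<times> ?B)" using fA fB by simp
      show ?thesis using True p by (simp add: conv_superset[OF fAB TT_supp])
    qed
    also have "\<dots> = (\<Sum>z\<in>?A \<times> ?B. case z of (g', h') \<Rightarrow>
          (x g' * y (inv\<^bsub>G\<^esub> g' \<otimes>\<^bsub>G\<^esub> g)) * of_int (u h' * v (inv\<^bsub>H\<^esub> h' \<otimes>\<^bsub>H\<^esub> h)))"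
    proof (rule sum.cong)
      fix z assume z: "z \<in> ?A \<times> ?B"
      obtain g' h' where z': "z = (g', h')" by (cases z)
      have "g' \<in> carrier G" "h' \<in> carrier H" using z z' Ac Bc by auto
      then have "inv\<^bsub>G \<times>\<times> H\<^esub> z = (inv\<^bsub>G\<^esub> g', inv\<^bsub>H\<^esub> h')" using z' G H by simp
      then show "TT x u z * TT y v (inv\<^bsub>G \<times>\<times> H\<^esub> z \<otimes>\<^bsub>G \<times>\<times> H\<^esub> p) = (case z of (g', h') \<Rightarrow>
          (x g' * y (inv\<^bsub>G\<^esub> g' \<otimes>\<^bsub>G\<^esub> g)) * of_int (u h' * v (inv\<^bsub>H\<^esub> h' \<otimes>\<^bsub>H\<^esub> h)))"
        using z' p by (simp add: TT_def mult.assoc of_int_left_comm)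
    qed simp
    also have "\<dots> = (\<Sum>g'\<in>?A. \<Sum>h'\<in>?B. (x g' * y (inv\<^bsub>G\<^esub> g' \<otimes>\<^bsub>G\<^esub> g)) * of_int (u h' * v (inv\<^bsub>H\<^esub> h' \<otimes>\<^bsub>H\<^esub> h)))"
      by (simp add: sum.cartesian_product)
    also have "\<dots> = (\<Sum>g'\<in>?A. x g' * y (inv\<^bsub>G\<^esub> g' \<otimes>\<^bsub>G\<^esub> g) * of_int (\<Sum>h'\<in>?B. u h' * v (inv\<^bsub>H\<^esub> h' \<otimes>\<^bsub>H\<^esub> h)))"
      by (simp only: sum_distrib_left of_int_sum)
    also have "\<dots> = (\<Sum>g'\<in>?A. x g' * y (inv\<^bsub>G\<^esub> g' \<otimes>\<^bsub>G\<^esub> g)) * of_int (\<Sum>h'\<in>?B. u h' * v (inv\<^bsub>H\<^esub> h' \<otimes>\<^bsub>H\<^esub> h))"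
      by (simp only: sum_distrib_right)
    also have "\<dots> = TT (conv G x y) (conv H u v) p"
      using True by (simp add: TT_def conv_def p)
    finally show ?thesis .
  qed
qed

lemma TT_add_left: "TT (\<lambda>g. x g + x' g) u = (\<lambda>p. TT x u p + TT x' u p)"
  by (simp add: TT_def fun_eq_iff distrib_right)

lemma TT_zero_right: "TT x (\<lambda>h. 0) = (\<lambda>p. 0)"
  by (simp add: TT_def)

lemma TT_zero_left: "TT (\<lambda>g. 0) u = (\<lambda>p. 0)"
  by (simp add: TT_def)

lemma TT_scal_right: "TT x (\<lambda>h. c * u h) = TT (\<lambda>g. of_int c * x g) u"
  unfolding TT_def by (rule ext) (metis mult.assoc mult_of_int_commute of_int_mult)

definition Phi :: "nat \<Rightarrow> nat \<Rightarrow> (nat \<Rightarrow> nat \<Rightarrow> 'g \<Rightarrow> 'k::ring_1) \<Rightarrow> ('g \<Rightarrow> 'k) \<Rightarrow> 'g \<times> nat \<Rightarrow> 'k" where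
  "Phi n q Z y = (\<lambda>p. (\<Sum>i<n. \<Sum>j<n. TT (Z i j) (EE n q i j) p) + TT y (FF n q) p)"

lemma gc_add:
  fixes f h :: "'a \<Rightarrow> 'c::monoid_add"
  shows "gc G f \<Longrightarrow> gc G h \<Longrightarrow> gc G (\<lambda>x. f x + h x)"
proof -
  assume a: "gc G f" "gc G h"
  have "{x. f x + h x \<noteq> 0} \<subseteq> {x. f x \<noteq> 0} \<union> {x. h x \<noteq> 0}" by auto
  then show ?thesis using a unfolding gc_def by (auto intro: finite_subset)
qed

lemma gc_sum: "finite I \<Longrightarrow> (\<And>a. a \<in> I \<Longrightarrow> gc G (f a)) \<Longrightarrow> gc G (\<lambda>x. \<Sum>a\<in>I. f a x)"
proof (induction I rule: finite_induct)
  case empty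
  then show ?case by (simp add: gc_def)
next
  case (insert a I)
  then show ?case by (simp add: gc_add)
qed

lemma gc_fin: "gc G f \<Longrightarrow> finite {x. f x \<noteq> 0}"
  by (simp add: gc_def)

lemma gc_Phi:
  assumes "0 < n" "0 < q" "\<And>i j. i < n \<Longrightarrow> j < n \<Longrightarrow> gc G (Z i j)" "gc G y"
  shows "gc (G \<times>\<times> Wg n q) (Phi n q Z y)"
  unfolding Phi_def
  by (intro gc_add gc_sum gc_TT finite_lessThan gc_EE gc_FF assms) auto

lemma sum_delta3:
  fixes Xf :: "'i \<Rightarrow> 'i \<Rightarrow> 'j \<Rightarrow> 'c::comm_monoid_add"
  assumes "finite AA"
  shows "(\<Sum>a\<in>AA. \<Sum>b\<in>AA. \<Sum>c\<in>BB. if a = b then Xf a b c else 0) = (\<Sum>a\<in>AA. \<Sum>c\<in>BB. Xf a a c)"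
proof (rule sum.cong[OF refl])
  fix a assume a: "a \<in> AA"
  have "(\<Sum>b\<in>AA. \<Sum>c\<in>BB. if a = b then Xf a b c else 0) = (\<Sum>b\<in>AA. if a = b then (\<Sum>c\<in>BB. Xf a b c) else 0)"
    by (rule sum.cong) auto
  also have "\<dots> = (\<Sum>c\<in>BB. Xf a a c)" using a assms by (simp add: sum.delta)
  finally show "(\<Sum>b\<in>AA. \<Sum>c\<in>BB. if a = b then Xf a b c else 0) = (\<Sum>c\<in>BB. Xf a a c)" .
qed

lemma scal_move: "(of_int D * a) * of_int e = a * (of_int (D * e) :: 'k::ring_1)"
  by (metis mult.assoc mult_of_int_commute of_int_mult)

lemma Phi_mult:
  assumes G: "group G" and n: "0 < n" and q: "0 < q"
    and Z: "\<And>i j. i < n \<Longrightarrow> j < n \<Longrightarrow> gc G (Z i j)" and y: "gc G y"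
    and Z': "\<And>i j. i < n \<Longrightarrow> j < n \<Longrightarrow> gc G (Z' i j)" and y': "gc G y'"
  shows "conv (G \<times>\<times> Wg n q) (Phi n q Z y) (Phi n q Z' y') =
     Phi n q (\<lambda>i l g. of_int (int q ^ n) * (\<Sum>j<n. conv G (Z i j) (Z' j l) g)) (\<lambda>g. of_int (int q ^ n) * conv G y y' g)"
proof -
  interpret W: group "Wg n q" by (rule Wg_group[OF n q])
  let ?GH = "G \<times>\<times> Wg n q"
  let ?D = "int q ^ n"
  define A where "A = (\<lambda>p. \<Sum>i<n. \<Sum>j<n. TT (Z i j) (EE n q i j) p)"
  define A' where "A' = (\<lambda>p. \<Sum>i<n. \<Sum>j<n. TT (Z' i j) (EE n q i j) p)"
  define B where "B = TT y (FF n q)"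
  define B' where "B' = TT y' (FF n q)"
  have gA: "gc ?GH A" unfolding A_def by (intro gc_sum gc_TT finite_lessThan gc_EE Z) auto
  have gB: "gc ?GH B" unfolding B_def by (intro gc_TT gc_FF y n q)
  have fT: "finite {p. TT (Z i j) (EE n q i j) p \<noteq> 0}" if "i < n" "j < n" for i j
    using gc_fin[OF gc_TT[OF Z[OF that] gc_EE]] .
  have fTi: "finite {p. (\<Sum>j<n. TT (Z i j) (EE n q i j) p) \<noteq> 0}" if "i < n" for i
    by (rule fin_supp_sum) (auto intro: fT that)
  have Phi1: "Phi n q Z y = (\<lambda>p. A p + B p)" by (simp add: Phi_def A_def B_def)
  have Phi2: "Phi n q Z' y' = (\<lambda>p. A' p + B' p)" by (simp add: Phi_def A'_def B'_def)
  have split: "conv ?GH (Phi n q Z y) (Phi n q Z' y') =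
       (\<lambda>p. conv ?GH A A' p + conv ?GH A B' p + (conv ?GH B A' p + conv ?GH B B' p))"
    unfolding Phi1 Phi2 conv_add_left[OF gc_fin[OF gA] gc_fin[OF gB]] conv_add_right by simp
  have convA: "conv ?GH A h = (\<lambda>p. \<Sum>i<n. \<Sum>j<n. conv ?GH (TT (Z i j) (EE n q i j)) h p)" for h
  proof -
    have "conv ?GH A h = (\<lambda>p. \<Sum>i<n. conv ?GH (\<lambda>p. \<Sum>j<n. TT (Z i j) (EE n q i j) p) h p)"
      unfolding A_def by (rule conv_sum_left) (auto intro: fTi)
    also have "\<dots> = (\<lambda>p. \<Sum>i<n. \<Sum>j<n. conv ?GH (TT (Z i j) (EE n q i j)) h p)"
    proof -
      have inner: "conv ?GH (\<lambda>p. \<Sum>j<n. TT (Z i j) (EE n q i j) p) h = (\<lambda>p. \<Sum>j<n. conv ?GH (TT (Z i j) (EE n q i j)) h p)"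
        if "i < n" for i by (rule conv_sum_left) (auto intro: fT that)
      show ?thesis by (intro ext sum.cong refl) (simp add: inner)
    qed
    finally show ?thesis .
  qed
  have convR: "conv ?GH f A' = (\<lambda>p. \<Sum>k<n. \<Sum>l<n. conv ?GH f (TT (Z' k l) (EE n q k l)) p)" for f
    unfolding A'_def conv_sum_right by simp
  have AA: "conv ?GH A A' = (\<lambda>p. \<Sum>i<n. \<Sum>j<n. \<Sum>k<n. \<Sum>l<n.
      (if j = k then conv G (Z i j) (Z' k l) (fst p) * of_int (?D * EE n q i l (snd p)) else 0))"
  proof -
    have "conv ?GH (TT (Z i j) (EE n q i j)) (TT (Z' k l) (EE n q k l)) p =
      (if j = k then conv G (Z i j) (Z' k l) (fst p) * of_int (?D * EE n q i l (snd p)) else 0)"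
      if "i < n" "j < n" "k < n" "l < n" for i j k l p
      unfolding tensor[OF G Wg_group[OF n q] Z[OF that(1,2)] gc_EE] EE_mult[OF n q that] by (simp add: TT_def)
    then show ?thesis unfolding convA unfolding convR by (intro ext sum.cong refl) simp
  qed
  have AB: "conv ?GH A B' = (\<lambda>p. 0)"
  proof -
    have "conv ?GH (TT (Z i j) (EE n q i j)) B' = (\<lambda>p. 0)" if "i < n" "j < n" for i j
      using that unfolding B'_def by (simp add: tensor[OF G Wg_group[OF n q] Z gc_EE] EE_FF[OF n q] TT_zero_right)
    then show ?thesis unfolding convA by simp
  qed
  have BA: "conv ?GH B A' = (\<lambda>p. 0)"
  proof -
    have "conv ?GH B (TT (Z' k l) (EE n q k l)) = (\<lambda>p. 0)" if "k < n" "l < n" for k l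
      using that unfolding B_def by (simp add: tensor[OF G Wg_group[OF n q] y gc_FF[OF n q]] FF_EE[OF n q] TT_zero_right)
    then show ?thesis unfolding convR by simp
  qed
  have BB: "conv ?GH B B' = TT (\<lambda>g. of_int ?D * conv G y y' g) (FF n q)"
    unfolding B_def B'_def by (simp add: tensor[OF G Wg_group[OF n q] y gc_FF[OF n q]] FF_FF[OF n q] TT_scal_right)
  show ?thesis
  proof
    fix p
    have "(\<Sum>i<n. \<Sum>j<n. \<Sum>k<n. \<Sum>l<n.
      (if j = k then conv G (Z i j) (Z' k l) (fst p) * of_int (?D * EE n q i l (snd p)) else 0))
      = (\<Sum>i<n. \<Sum>j<n. \<Sum>l<n. conv G (Z i j) (Z' j l) (fst p) * of_int (?D * EE n q i l (snd p)))"
      by (simp only: sum_delta3[OF finite_lessThan])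
    also have "\<dots> = (\<Sum>i<n. \<Sum>l<n. TT (\<lambda>g. of_int ?D * (\<Sum>j<n. conv G (Z i j) (Z' j l) g)) (EE n q i l) p)"
    proof (rule sum.cong[OF refl])
      fix i
      have "(\<Sum>j<n. \<Sum>l<n. conv G (Z i j) (Z' j l) (fst p) * of_int (?D * EE n q i l (snd p)))
          = (\<Sum>l<n. \<Sum>j<n. conv G (Z i j) (Z' j l) (fst p) * of_int (?D * EE n q i l (snd p)))"
        by (rule sum.swap)
      also have "\<dots> = (\<Sum>l<n. TT (\<lambda>g. of_int ?D * (\<Sum>j<n. conv G (Z i j) (Z' j l) g)) (EE n q i l) p)"
        by (simp only: TT_def scal_move sum_distrib_right)
      finally show "(\<Sum>j<n. \<Sum>l<n. conv G (Z i j) (Z' j l) (fst p) * of_int (?D * EE n q i l (snd p)))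
          = (\<Sum>l<n. TT (\<lambda>g. of_int ?D * (\<Sum>j<n. conv G (Z i j) (Z' j l) g)) (EE n q i l) p)" .
    qed
    finally show "conv ?GH (Phi n q Z y) (Phi n q Z' y') p =
     Phi n q (\<lambda>i l g. of_int (int q ^ n) * (\<Sum>j<n. conv G (Z i j) (Z' j l) g)) (\<lambda>g. of_int (int q ^ n) * conv G y y' g) p"
      unfolding split AA AB BA BB by (simp add: Phi_def)
  qed
qed

lemma gc_zero0: "gc G (\<lambda>x. 0)"
  by (simp add: gc_def)

lemma gr_abelian_monoid: "abelian_monoid (group_ring G)"
  apply (rule abelian_monoidI)
  unfolding gr_carrier gr_add gr_zero mem_Collect_eq
      apply (erule (1) gc_add)
     apply (rule gc_zero0)
    apply (simp_all add: fun_eq_iff ac_simps)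
  done

lemma finsum_gr:
  assumes "finite I" "\<And>i. i \<in> I \<Longrightarrow> gc G (f i)"
  shows "finsum (group_ring G) f I = (\<lambda>x. \<Sum>i\<in>I. f i x)"
  using assms
proof (induction I rule: finite_induct)
  case empty
  then show ?case using abelian_monoid.finsum_empty[OF gr_abelian_monoid] by (simp add: gr_zero)
next
  case (insert a I)
  have "finsum (group_ring G) f (insert a I) = f a \<oplus>\<^bsub>group_ring G\<^esub> finsum (group_ring G) f I"
    by (rule abelian_monoid.finsum_insert[OF gr_abelian_monoid]) (use insert in \<open>auto simp: gr_carrier\<close>)
  then show ?case using insert by (simp add: gr_add)
qed

lemma gc_smult: "gc G f \<Longrightarrow> gc G (\<lambda>x. (c::'c::ring) * f x)"
  unfolding gc_def by (auto elim: finite_subset[rotated])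

lemma gc_zero: "gc G (\<lambda>x. 0)"
  by (simp add: gc_def)

lemma gc_delta:
  assumes "group G" shows "gc G (\<lambda>x. if x = \<one>\<^bsub>G\<^esub> then (1::'c::ring_1) else 0)"
  using monoid.one_closed[OF group.is_monoid[OF assms]] by (auto simp: gc_def)

lemma conv_zero_right: "conv G f (\<lambda>x. 0) = (\<lambda>x. 0)"
  by (rule ext) (simp add: conv_def)

lemma Phi_cong:
  assumes "\<And>i j. i < n \<Longrightarrow> j < n \<Longrightarrow> Z i j = Z' i j" "y = y'"
  shows "Phi n q Z y = Phi n q Z' y'"
  unfolding Phi_def using assms by (intro ext arg_cong2[where f="(+)"] sum.cong refl) auto

lemma Phi_diag:
  assumes "0 < n"
  shows "Phi n q (\<lambda>i l. if i = l then x else (\<lambda>g. 0)) x = TT (\<lambda>g. of_int (int q ^ n) * x g) (dW n q)"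
proof
  fix p
  have "Phi n q (\<lambda>i l. if i = l then x else (\<lambda>g. 0)) x p =
        (\<Sum>i<n. TT x (EE n q i i) p) + TT x (FF n q) p"
    unfolding Phi_def by (simp add: TT_zero_left if_distrib[of "\<lambda>z. TT z _ p"] sum.delta cong: if_cong)
  also have "\<dots> = x (fst p) * of_int ((\<Sum>i<n. EE n q i i (snd p)) + FF n q (snd p))"
    by (simp add: TT_def sum_distrib_left distrib_left)
  also have "\<dots> = TT (\<lambda>g. of_int (int q ^ n) * x g) (dW n q) p"
  proof -
    have eq: "(\<Sum>i<n. EE n q i i (snd p)) + FF n q (snd p) = int q ^ n * dW n q (snd p)"
      by (simp add: FF_def)
    show ?thesis by (simp only: TT_def scal_move eq)
  qed
  finally show "Phi n q (\<lambda>i l. if i = l then x else (\<lambda>g. 0)) x p = TT (\<lambda>g. of_int (int q ^ n) * x g) (dW n q) p" .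
qed

lemma dd_sum:
  assumes "0 < (n::nat)"
  shows "(\<Sum>i<n. \<Sum>j<n. if i = 0 \<and> j = 0 then K else 0) = K"
proof -
  have "(\<Sum>j<n. if i = 0 \<and> j = 0 then K else 0) = (if i = 0 then K else 0)" for i :: nat
    using assms by (cases "i = 0") (simp_all add: sum.delta)
  then show ?thesis using assms by (simp add: sum.delta)
qed

lemma Phi_corner:
  assumes "0 < n"
  shows "Phi n q (\<lambda>a b. if a = 0 \<and> b = 0 then z else (\<lambda>g. 0)) (\<lambda>g. 0) = TT z (EE n q 0 0)"
proof
  fix p
  have "(\<Sum>i<n. \<Sum>j<n. TT (if i = 0 \<and> j = 0 then z else (\<lambda>g. 0)) (EE n q i j) p) =
        (\<Sum>i<n. \<Sum>j<n. if i = 0 \<and> j = 0 then TT z (EE n q 0 0) p else 0)"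
    by (intro sum.cong refl) (auto simp: TT_zero_left)
  also have "\<dots> = TT z (EE n q 0 0) p" by (rule dd_sum[OF assms])
  finally show "Phi n q (\<lambda>a b. if a = 0 \<and> b = 0 then z else (\<lambda>g. 0)) (\<lambda>g. 0) p = TT z (EE n q 0 0) p"
    unfolding Phi_def by (simp add: TT_zero_left)
qed

lemma conv_if_left: "conv G (if c then f else f') h = (if c then conv G f h else conv G f' h)"
  by simp

lemma conv_if_right: "conv G f (if c then h else h') = (if c then conv G f h else conv G f h')"
  by simp

lemma gc_unit_left:
  fixes f :: "'a \<Rightarrow> 'c::ring_1"
  assumes "group G" "gc G f"
  shows "conv G (\<lambda>x. if x = \<one>\<^bsub>G\<^esub> then 1 else 0) f = f"
  using group.conv_unit_left[OF assms(1), of f] assms(2) by (auto simp: gc_def fun_eq_iff)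

lemma sandwich:
  fixes N :: "nat \<Rightarrow> nat \<Rightarrow> 'g \<Rightarrow> 'k::ring_1"
  assumes G: "group G" and n: "0 < n" and q: "0 < q" and il: "i < n" "l < n"
    and N: "\<And>a b. a < n \<Longrightarrow> b < n \<Longrightarrow> gc G (N a b)" and y: "gc G y"
  defines "\<delta> \<equiv> (\<lambda>g. if g = \<one>\<^bsub>G\<^esub> then 1 else (0::'k))"
  shows "conv (G \<times>\<times> Wg n q) (conv (G \<times>\<times> Wg n q)
            (Phi n q (\<lambda>a b. if a = 0 \<and> b = i then \<delta> else (\<lambda>g. 0)) (\<lambda>g. 0)) (Phi n q N y))
            (Phi n q (\<lambda>a b. if a = l \<and> b = 0 then \<delta> else (\<lambda>g. 0)) (\<lambda>g. 0))
         = TT (\<lambda>g. of_int (int q ^ n) * (of_int (int q ^ n) * N i l g)) (EE n q 0 0)"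
proof -
  let ?D = "of_int (int q ^ n) :: 'k"
  have gd: "gc G \<delta>" unfolding \<delta>_def by (rule gc_delta[OF G])
  have gL: "gc G (if a = 0 \<and> b = i then \<delta> else (\<lambda>g. 0))" for a b
    using gd gc_zero0 by auto
  have gR: "gc G (if a = l \<and> b = 0 then \<delta> else (\<lambda>g. 0))" for a b
    using gd gc_zero0 by auto
  let ?M = "\<lambda>a b. if a = 0 then (\<lambda>g. ?D * N i b g) else (\<lambda>g. 0)"
  have gM: "gc G (?M a b)" if "b < n" for a b
    using gc_smult[OF N[OF il(1) that]] gc_zero0 by auto
  have step1: "conv (G \<times>\<times> Wg n q) (Phi n q (\<lambda>a b. if a = 0 \<and> b = i then \<delta> else (\<lambda>g. 0)) (\<lambda>g. 0)) (Phi n q N y)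
      = Phi n q ?M (\<lambda>g. 0)"
  proof -
    have e: "(\<lambda>g. ?D * (\<Sum>j<n. conv G (if a = 0 \<and> j = i then \<delta> else (\<lambda>g. 0)) (N j b) g)) = ?M a b"
      if "a < n" "b < n" for a b
    proof -
      have "conv G (if a = 0 \<and> j = i then \<delta> else (\<lambda>g. 0)) (N j b) g = (if a = 0 \<and> j = i then N j b g else 0)"
        if "j < n" for j g
      proof (cases "a = 0 \<and> j = i")
        case True
        then show ?thesis using gc_unit_left[OF G N[OF that \<open>b < n\<close>]] by (simp add: \<delta>_def)
      next
        case False
        then have e0: "(if a = 0 \<and> j = i then \<delta> else (\<lambda>g. 0)) = (\<lambda>g. 0)" by meson
        show ?thesis unfolding e0 conv_zero_left using False by meson
      qed
      then have "(\<Sum>j<n. conv G (if a = 0 \<and> j = i then \<delta> else (\<lambda>g. 0)) (N j b) g) =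
          (\<Sum>j<n. if a = 0 \<and> j = i then N j b g else 0)" for g by (intro sum.cong) auto
      then show ?thesis using il by (cases "a = 0") (simp_all add: fun_eq_iff sum.delta)
    qed
    have "conv (G \<times>\<times> Wg n q) (Phi n q (\<lambda>a b. if a = 0 \<and> b = i then \<delta> else (\<lambda>g. 0)) (\<lambda>g. 0)) (Phi n q N y)
      = Phi n q (\<lambda>a b g. ?D * (\<Sum>j<n. conv G (if a = 0 \<and> j = i then \<delta> else (\<lambda>g. 0)) (N j b) g))
          (\<lambda>g. ?D * conv G (\<lambda>g. 0) y g)"
      by (rule Phi_mult[OF G n q gL gc_zero0 N y])
    also have "\<dots> = Phi n q ?M (\<lambda>g. 0)"
      by (rule Phi_cong) (use e in auto, simp add: conv_zero_left)
    finally show ?thesis .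
  qed
  have step2: "conv (G \<times>\<times> Wg n q) (Phi n q ?M (\<lambda>g. 0)) (Phi n q (\<lambda>a b. if a = l \<and> b = 0 then \<delta> else (\<lambda>g. 0)) (\<lambda>g. 0))
     = Phi n q (\<lambda>a b. if a = 0 \<and> b = 0 then (\<lambda>g. ?D * (?D * N i l g)) else (\<lambda>g. 0)) (\<lambda>g. 0)"
  proof -
    have e: "(\<lambda>g. ?D * (\<Sum>j<n. conv G (?M a j) (if j = l \<and> b = 0 then \<delta> else (\<lambda>g. 0)) g))
        = (if a = 0 \<and> b = 0 then (\<lambda>g. ?D * (?D * N i l g)) else (\<lambda>g. 0))"
      if "a < n" "b < n" for a b
    proof -
      have "conv G (?M a j) (if j = l \<and> b = 0 then \<delta> else (\<lambda>g. 0)) g =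
            (if j = l \<and> b = 0 then ?M a j g else 0)" if "j < n" for j g
      proof (cases "j = l \<and> b = 0")
        case True
        then show ?thesis using group.conv_unit_right[OF G gM[OF that, of a]] by (simp add: \<delta>_def)
      next
        case False
        then have e0: "(if j = l \<and> b = 0 then \<delta> else (\<lambda>g. 0)) = (\<lambda>g. 0)" by meson
        show ?thesis unfolding e0 conv_zero_right using False by meson
      qed
      then have "(\<Sum>j<n. conv G (?M a j) (if j = l \<and> b = 0 then \<delta> else (\<lambda>g. 0)) g) =
          (\<Sum>j<n. if j = l \<and> b = 0 then ?M a j g else 0)" for g by (intro sum.cong) auto
      then show ?thesis using il by (cases "b = 0"; cases "a = 0") (simp_all add: fun_eq_iff sum.delta)
    qed
    have "conv (G \<times>\<times> Wg n q) (Phi n q ?M (\<lambda>g. 0)) (Phi n q (\<lambda>a b. if a = l \<and> b = 0 then \<delta> else (\<lambda>g. 0)) (\<lambda>g. 0))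
      = Phi n q (\<lambda>a b g. ?D * (\<Sum>j<n. conv G (?M a j) (if j = l \<and> b = 0 then \<delta> else (\<lambda>g. 0)) g))
          (\<lambda>g. ?D * conv G (\<lambda>g. 0) (\<lambda>g. 0) g)"
      by (rule Phi_mult[OF G n q gM gc_zero0 gR gc_zero0])
    also have "\<dots> = Phi n q (\<lambda>a b. if a = 0 \<and> b = 0 then (\<lambda>g. ?D * (?D * N i l g)) else (\<lambda>g. 0)) (\<lambda>g. 0)"
      by (rule Phi_cong) (use e in auto, simp add: conv_zero_left)
    finally show ?thesis .
  qed
  show ?thesis unfolding step1 step2 Phi_corner[OF n] ..
qed

lemma inv_of_int_central: "inverse (of_int D) * z = z * inverse (of_int D :: 'k::division_ring)"
proof (cases "of_int D = (0::'k)")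
  case True then show ?thesis by simp
next
  case False
  have "inverse (of_int D) * z = inverse (of_int D) * z * (of_int D * inverse (of_int D))"
    using False by simp
  also have "\<dots> = inverse (of_int D) * (of_int D * z) * inverse (of_int D)"
    by (metis mult.assoc mult_of_int_commute)
  also have "\<dots> = z * inverse (of_int D)" using False by (simp add: mult.assoc[symmetric])
  finally show ?thesis .
qed

definition v0 :: "nat \<Rightarrow> nat \<Rightarrow> nat" where
  "v0 n = (\<lambda>i. if i < n then (if i = 0 then 0 else 1) else undefined)"

lemma h0_PP: "0 < n \<Longrightarrow> 2 \<le> q \<Longrightarrow> (0, v0 n) \<in> PP n q"
  unfolding PP_def VV_def v0_def by (auto simp: PiE_iff extensional_def)

lemma EE_h0:
  assumes n: "0 < n" and q: "2 \<le> q"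
  shows "of_int (EE n q 0 0 (enc n (0, v0 n))) \<noteq> (0::'k::division_ring)"
proof -
  let ?f = "\<lambda>i. pat q 0 i (v0 n i)"
  have e: "EE n q 0 0 (enc n (0, v0 n)) = (\<Prod>i<n. ?f i)"
    using h0_PP[OF n q] by (simp add: EE_def Q_def Wg_carrier dec_enc)
  have "?f i * ?f i = 1" if "i < n" for i using that by (simp add: pat_def v0_def)
  then have "(\<Prod>i<n. ?f i) * (\<Prod>i<n. ?f i) = 1" by (simp add: prod.distrib[symmetric])
  then have "of_int (\<Prod>i<n. ?f i) * of_int (\<Prod>i<n. ?f i) = (1::'k)" by (metis of_int_1 of_int_mult)
  then show ?thesis unfolding e by auto
qed

lemma matrix_carrier_gc:
  assumes "Xm \<in> carrier (matrix_ring (group_ring G) n)" "i < n" "j < n"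
  shows "gc G (Xm i j)"
  using assms by (auto simp: matrix_ring_def gr_carrier)

lemma matrix_out:
  assumes "Xm \<in> carrier (matrix_ring (group_ring G) n)" "\<not> (i < n \<and> j < n)"
  shows "Xm i j = (\<lambda>x. 0)"
  using assms by (auto simp: matrix_ring_def gr_zero)

lemma matrix_mult_gr:
  assumes G: "group G"
    and Xm: "Xm \<in> carrier (matrix_ring (group_ring G) n)" and Ym: "Ym \<in> carrier (matrix_ring (group_ring G) n)"
  shows "(Xm \<otimes>\<^bsub>matrix_ring (group_ring G) n\<^esub> Ym) i j =
     (if i < n \<and> j < n then (\<lambda>g. \<Sum>k<n. conv G (Xm i k) (Ym k j) g) else (\<lambda>g. 0))"
proof -
  have u: "(Xm \<otimes>\<^bsub>matrix_ring (group_ring G) n\<^esub> Ym) i j = (if i < n \<and> j < n then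
      finsum (group_ring G) (\<lambda>k. Xm i k \<otimes>\<^bsub>group_ring G\<^esub> Ym k j) {..<n} else \<zero>\<^bsub>group_ring G\<^esub>)"
    by (simp add: matrix_ring_def)
  show ?thesis
  proof (cases "i < n \<and> j < n")
    case True
    have "finsum (group_ring G) (\<lambda>k. Xm i k \<otimes>\<^bsub>group_ring G\<^esub> Ym k j) {..<n} = (\<lambda>g. \<Sum>k<n. conv G (Xm i k) (Ym k j) g)"
      unfolding gr_mult
    proof (rule finsum_gr)
      fix k assume "k \<in> {..<n}"
      then show "gc G (conv G (Xm i k) (Ym k j))"
        using True by (intro group.gc_conv[OF G] matrix_carrier_gc[OF Xm] matrix_carrier_gc[OF Ym]) auto
    qed simp
    then show ?thesis unfolding u if_P[OF True] .
  next
    case False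
    then show ?thesis unfolding u if_not_P[OF False] gr_zero by simp
  qed
qed

lemma matrix_one_gr:
  "\<one>\<^bsub>matrix_ring (group_ring G) n\<^esub> i j = (if i < n \<and> j = i then (\<lambda>g. if g = \<one>\<^bsub>G\<^esub> then 1 else 0) else (\<lambda>g. 0))"
  by (simp add: matrix_ring_def gr_one gr_zero)

theorem theorem3p3:
  fixes \<Gamma> :: "('g, 'b) monoid_scheme"
  assumes "group \<Gamma>"
    and "\<forall>H :: nat monoid. group H \<and> finite (carrier H) \<longrightarrow>
           directly_finite (group_ring (\<Gamma> \<times>\<times> H) :: ('g \<times> nat \<Rightarrow> 'k::division_ring) ring)"
  shows "stably_finite (group_ring \<Gamma> :: ('g \<Rightarrow> 'k) ring)"
  unfolding stably_finite_def
proof (intro allI impI)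
  have G: "group \<Gamma>" by fact
  fix n :: nat assume "1 \<le> n"
  then have n: "0 < n" by simp
  obtain q :: nat where q2: "2 \<le> q" and qk: "of_nat q \<noteq> (0::'k)"
  proof (cases "of_nat 2 = (0::'k)")
    case True
    have "(of_nat 3 :: 'k) = of_nat (Suc 2)" by simp
    also have "\<dots> = 1 + of_nat 2" by (rule of_nat_Suc)
    finally have "(of_nat 3 :: 'k) = 1 + of_nat 2" .
    then have "(of_nat 3 :: 'k) = 1" by (simp only: True add_0_right)
    then have "of_nat 3 \<noteq> (0::'k)" by simp
    then show ?thesis using that[of 3] by simp
  next
    case False
    then show ?thesis using that[of 2] by simp
  qed
  have q: "0 < q" using q2 by simp
  define D where "D = int q ^ n"
  have Dk: "of_int D \<noteq> (0::'k)" using qk by (simp add: D_def)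
  define c :: 'k where "c = inverse (of_int D)"
  have cD: "of_int D * c = 1" using Dk by (simp add: c_def)
  have c0: "c \<noteq> 0" using Dk by (simp add: c_def)
  have cc: "\<And>z. z * c = c * z" unfolding c_def by (simp add: inv_of_int_central)
  let ?A = "group_ring \<Gamma> :: ('g \<Rightarrow> 'k) ring"
  let ?M = "matrix_ring ?A n"
  let ?GH = "\<Gamma> \<times>\<times> Wg n q"
  let ?R = "group_ring ?GH :: ('g \<times> nat \<Rightarrow> 'k) ring"
  have dfR: "directly_finite ?R" using assms(2) Wg_group[OF n q] Wg_finite by blast
  define \<delta> where "\<delta> = (\<lambda>g. if g = \<one>\<^bsub>\<Gamma>\<^esub> then 1 else (0::'k))"
  have gd: "gc \<Gamma> \<delta>" unfolding \<delta>_def by (rule gc_delta[OF G])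
  have gcd: "gc \<Gamma> (\<lambda>g. c * \<delta> g)" by (rule gc_smult[OF gd])
  have sc: "conv \<Gamma> (\<lambda>g. c * U g) (\<lambda>g. c * V g) = (\<lambda>g. c * (c * conv \<Gamma> U V g))" if "gc \<Gamma> U" for U V
    using that by (simp add: conv_smult_left gc_fin conv_smult_right cc)
  have dd: "conv \<Gamma> \<delta> \<delta> = \<delta>" unfolding \<delta>_def using gc_unit_left[OF G gd] by (simp add: \<delta>_def)
  have prodP: "conv ?GH (Phi n q (\<lambda>i j g. c * U i j g) (\<lambda>g. c * \<delta> g)) (Phi n q (\<lambda>i j g. c * V i j g) (\<lambda>g. c * \<delta> g))
     = Phi n q (\<lambda>i l g. c * (U \<otimes>\<^bsub>?M\<^esub> V) i l g) (\<lambda>g. c * \<delta> g)"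
    if U: "U \<in> carrier ?M" and V: "V \<in> carrier ?M" for U V
  proof -
    have gU: "\<And>i j. i < n \<Longrightarrow> j < n \<Longrightarrow> gc \<Gamma> (\<lambda>g. c * U i j g)"
      using matrix_carrier_gc[OF U] gc_smult by blast
    have gV: "\<And>i j. i < n \<Longrightarrow> j < n \<Longrightarrow> gc \<Gamma> (\<lambda>g. c * V i j g)"
      using matrix_carrier_gc[OF V] gc_smult by blast
    have "conv ?GH (Phi n q (\<lambda>i j g. c * U i j g) (\<lambda>g. c * \<delta> g)) (Phi n q (\<lambda>i j g. c * V i j g) (\<lambda>g. c * \<delta> g))
      = Phi n q (\<lambda>i l g. of_int (int q ^ n) * (\<Sum>j<n. conv \<Gamma> (\<lambda>g. c * U i j g) (\<lambda>g. c * V j l g) g))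
          (\<lambda>g. of_int (int q ^ n) * conv \<Gamma> (\<lambda>g. c * \<delta> g) (\<lambda>g. c * \<delta> g) g)"
      by (rule Phi_mult[OF G n q gU gcd gV gcd])
    also have "\<dots> = Phi n q (\<lambda>i l g. c * (U \<otimes>\<^bsub>?M\<^esub> V) i l g) (\<lambda>g. c * \<delta> g)"
    proof (rule Phi_cong)
      fix i l assume il: "i < n" "l < n"
      show "(\<lambda>g. of_int (int q ^ n) * (\<Sum>j<n. conv \<Gamma> (\<lambda>g. c * U i j g) (\<lambda>g. c * V j l g) g)) =
            (\<lambda>g. c * (U \<otimes>\<^bsub>?M\<^esub> V) i l g)"
      proof
        fix g
        have "(\<Sum>j<n. conv \<Gamma> (\<lambda>g. c * U i j g) (\<lambda>g. c * V j l g) g) = (\<Sum>j<n. c * (c * conv \<Gamma> (U i j) (V j l) g))"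
          by (rule sum.cong) (use sc matrix_carrier_gc[OF U] il in auto)
        also have "\<dots> = c * (c * (\<Sum>j<n. conv \<Gamma> (U i j) (V j l) g))" by (simp add: sum_distrib_left)
        finally show "of_int (int q ^ n) * (\<Sum>j<n. conv \<Gamma> (\<lambda>g. c * U i j g) (\<lambda>g. c * V j l g) g) = c * (U \<otimes>\<^bsub>?M\<^esub> V) i l g"
          using il cD by (simp add: matrix_mult_gr[OF G U V] D_def mult.assoc[symmetric])
      qed
    next
      show "(\<lambda>g. of_int (int q ^ n) * conv \<Gamma> (\<lambda>g. c * \<delta> g) (\<lambda>g. c * \<delta> g) g) = (\<lambda>g. c * \<delta> g)"
        using sc[OF gd, of \<delta>] dd cD by (simp add: D_def mult.assoc[symmetric])
    qed
    finally show ?thesis .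
  qed
  have oneR: "Phi n q (\<lambda>i l. if i = l then (\<lambda>g. c * \<delta> g) else (\<lambda>g. 0)) (\<lambda>g. c * \<delta> g) = \<one>\<^bsub>?R\<^esub>"
  proof -
    have "Phi n q (\<lambda>i l. if i = l then (\<lambda>g. c * \<delta> g) else (\<lambda>g. 0)) (\<lambda>g. c * \<delta> g)
        = TT (\<lambda>g. of_int (int q ^ n) * (c * \<delta> g)) (dW n q)" by (rule Phi_diag[OF n])
    also have "\<dots> = TT \<delta> (dW n q)" using cD by (simp add: D_def mult.assoc[symmetric])
    also have "\<dots> = \<one>\<^bsub>?R\<^esub>" by (auto simp: TT_def gr_one \<delta>_def dW_def fun_eq_iff)
    finally show ?thesis .
  qed
  have oneM: "Phi n q (\<lambda>i l g. c * \<one>\<^bsub>?M\<^esub> i l g) (\<lambda>g. c * \<delta> g) =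
     Phi n q (\<lambda>i l. if i = l then (\<lambda>g. c * \<delta> g) else (\<lambda>g. 0)) (\<lambda>g. c * \<delta> g)"
    by (rule Phi_cong) (auto simp: matrix_one_gr \<delta>_def fun_eq_iff)
  show "directly_finite ?M" unfolding directly_finite_def
  proof (intro ballI impI)
    fix Xm Ym assume Xm: "Xm \<in> carrier ?M" and Ym: "Ym \<in> carrier ?M" and XmYm: "Xm \<otimes>\<^bsub>?M\<^esub> Ym = \<one>\<^bsub>?M\<^esub>"
    define a where "a = Phi n q (\<lambda>i j g. c * Xm i j g) (\<lambda>g. c * \<delta> g)"
    define b where "b = Phi n q (\<lambda>i j g. c * Ym i j g) (\<lambda>g. c * \<delta> g)"
    have aR: "a \<in> carrier ?R" unfolding a_def gr_carrier mem_Collect_eq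
      by (rule gc_Phi[OF n q _ gcd]) (use matrix_carrier_gc[OF Xm] gc_smult in blast)
    have bR: "b \<in> carrier ?R" unfolding b_def gr_carrier mem_Collect_eq
      by (rule gc_Phi[OF n q _ gcd]) (use matrix_carrier_gc[OF Ym] gc_smult in blast)
    have "a \<otimes>\<^bsub>?R\<^esub> b = \<one>\<^bsub>?R\<^esub>"
      unfolding gr_mult a_def b_def prodP[OF Xm Ym] XmYm oneM oneR ..
    then have ba: "b \<otimes>\<^bsub>?R\<^esub> a = \<one>\<^bsub>?R\<^esub>" using dfR aR bR unfolding directly_finite_def by blast
    have PE: "Phi n q (\<lambda>i l g. c * (Ym \<otimes>\<^bsub>?M\<^esub> Xm) i l g) (\<lambda>g. c * \<delta> g) =
              Phi n q (\<lambda>i l. if i = l then (\<lambda>g. c * \<delta> g) else (\<lambda>g. 0)) (\<lambda>g. c * \<delta> g)"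
      using ba unfolding gr_mult a_def b_def prodP[OF Ym Xm] oneR .
    have YmXmc: "Ym \<otimes>\<^bsub>?M\<^esub> Xm \<in> carrier ?M"
    proof -
      have ce: "carrier ?M = {M. (\<forall>i j. i < n \<and> j < n \<longrightarrow> M i j \<in> carrier ?A) \<and>
                     (\<forall>i j. \<not> (i < n \<and> j < n) \<longrightarrow> M i j = \<zero>\<^bsub>?A\<^esub>)}"
        by (simp add: matrix_ring_def)
      have 1: "(Ym \<otimes>\<^bsub>?M\<^esub> Xm) i j \<in> carrier ?A" if "i < n" "j < n" for i j
      proof -
        have "gc \<Gamma> (\<lambda>g. \<Sum>k<n. conv \<Gamma> (Ym i k) (Xm k j) g)"
          by (rule gc_sum) (use that in \<open>auto intro!: group.gc_conv[OF G] matrix_carrier_gc[OF Ym] matrix_carrier_gc[OF Xm]\<close>)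
        then show ?thesis unfolding matrix_mult_gr[OF G Ym Xm] if_P[OF conjI[OF that]] gr_carrier by simp
      qed
      have 2: "(Ym \<otimes>\<^bsub>?M\<^esub> Xm) i j = \<zero>\<^bsub>?A\<^esub>" if "\<not> (i < n \<and> j < n)" for i j
        unfolding matrix_mult_gr[OF G Ym Xm] if_not_P[OF that] gr_zero ..
      show ?thesis unfolding ce using 1 2 by blast
    qed
    have entry: "(Ym \<otimes>\<^bsub>?M\<^esub> Xm) i l g = (if i = l then \<delta> g else 0)" if il: "i < n" "l < n" for i l g
    proof -
      let ?N1 = "\<lambda>i l g. c * (Ym \<otimes>\<^bsub>?M\<^esub> Xm) i l g"
      let ?N2 = "\<lambda>i l. if i = l then (\<lambda>g. c * \<delta> g) else (\<lambda>g. 0::'k)"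
      have g1: "\<And>a b. a < n \<Longrightarrow> b < n \<Longrightarrow> gc \<Gamma> (?N1 a b)"
        using matrix_carrier_gc[OF YmXmc] gc_smult by blast
      have g2: "\<And>a b. a < n \<Longrightarrow> b < n \<Longrightarrow> gc \<Gamma> (?N2 a b)"
        using gcd gc_zero0 by auto
      have "TT (\<lambda>g. of_int (int q ^ n) * (of_int (int q ^ n) * ?N1 i l g)) (EE n q 0 0) =
            TT (\<lambda>g. of_int (int q ^ n) * (of_int (int q ^ n) * ?N2 i l g)) (EE n q 0 0)"
      proof -
        let ?L = "Phi n q (\<lambda>a b. if a = 0 \<and> b = i then \<delta> else (\<lambda>g. 0)) (\<lambda>g. 0)"
        let ?Rr = "Phi n q (\<lambda>a b. if a = l \<and> b = 0 then \<delta> else (\<lambda>g. 0)) (\<lambda>g. 0)"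
        have s1: "conv ?GH (conv ?GH ?L (Phi n q ?N1 (\<lambda>g. c * \<delta> g))) ?Rr =
            TT (\<lambda>g. of_int (int q ^ n) * (of_int (int q ^ n) * ?N1 i l g)) (EE n q 0 0)"
          unfolding \<delta>_def by (rule sandwich[OF G n q il g1 gcd[unfolded \<delta>_def]])
        have s2: "conv ?GH (conv ?GH ?L (Phi n q ?N2 (\<lambda>g. c * \<delta> g))) ?Rr =
            TT (\<lambda>g. of_int (int q ^ n) * (of_int (int q ^ n) * ?N2 i l g)) (EE n q 0 0)"
          unfolding \<delta>_def by (rule sandwich[OF G n q il g2[unfolded \<delta>_def] gcd[unfolded \<delta>_def]])
        show ?thesis using s1 s2 PE by simp
      qed
      then have "TT (\<lambda>g. of_int (int q ^ n) * (of_int (int q ^ n) * ?N1 i l g)) (EE n q 0 0) (g, enc n (0, v0 n)) =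
            TT (\<lambda>g. of_int (int q ^ n) * (of_int (int q ^ n) * ?N2 i l g)) (EE n q 0 0) (g, enc n (0, v0 n))"
        by simp
      then have "?N1 i l g = ?N2 i l g"
        using EE_h0[OF n q2, where 'k='k] Dk qk n by (simp add: TT_def D_def)
      then show ?thesis using c0 by (cases "i = l") auto
    qed
    show "Ym \<otimes>\<^bsub>?M\<^esub> Xm = \<one>\<^bsub>?M\<^esub>"
    proof (intro ext)
      fix i l g
      show "(Ym \<otimes>\<^bsub>?M\<^esub> Xm) i l g = \<one>\<^bsub>?M\<^esub> i l g"
      proof (cases "i < n \<and> l < n")
        case True
        then show ?thesis using entry by (simp add: matrix_one_gr \<delta>_def)
      next
        case False
        then show ?thesis by (auto simp: matrix_mult_gr[OF G Ym Xm] matrix_one_gr)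
      qed
    qed
  qed
qed

end
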